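(* Let $(V_1,V_2)$ be a pair of commuting isometries on a Hilbert space $\mathcal H$ and $V=V_1V_2$. Then the following are equivalent: (a) $\operatorname{ran}V_1=\operatorname{ran}V_2$; (b) $V_1(\ker V_2^* )=V_2(\ker V_1^* )$; (c) the defect operator $C(V_1,V_2)$ is a difference $P_1-P_2$ of two mutually orthogonal projections $P_1,P_2$ with $\operatorname{ran}P_1\oplus\operatorname{ran}P_2=\ker V^*$; (d) the fringe operators $F_1$ and $F_2$ are zero; (e) if $(\mathcal E,P,U)$ is the BCL triple for $(V_1,V_2)$, then $U(\operatorname{ran}P)=\operatorname{ran}P^\perp$ (equivalently $U(\operatorname{ran}P^\perp)=\operatorname{ran}P$).
   Context: Defect operator: $C(V_1,V_2)=I-V_1V_1^*-V_2V_2^*+V_1V_2V_2^*V_1^*$. Fringe operators: $F_1:\ker V_1^*\to\ker V_1^*$, $F_1x=P_{\ker V_1^*}V_2x$, and $F_2:\ker V_2^*\to\ker V_2^*$, $F_2x=P_{\ker V_2^*}V_1x$. Given a Hilbert space $\mathcal E$, projection $P$ and unitary $U$ on $\mathcal E$, set $P^\perp=I-P$, $\varphi_1(z)=U^*(P^\perp+zP)$, $\varphi_2(z)=(P+zP^\perp)U$. Berger–Coburn–Lebow theorem: for commuting isometries $(V_1,V_2)$ on $\mathcal H$, $\mathcal H=\mathcal H_p\oplus\mathcal H_u$ (jointly reducing), $V_i|_{\mathcal H_u}$ commuting unitaries, and there is a triple $(\mathcal E,P,U)$, unique up to unitary equivalence, with $(V_1|_{\mathcal H_p},V_2|_{\mathcal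 H_p})$ unitarily equal to the multiplication operators $(M_{\varphi_1},M_{\varphi_2})$ on the Hardy space $H^2_{\mathbb D}(\mathcal E)$ ($\mathcal E\cong\ker V^*$); this is the BCL triple. *)

theory Defs
  imports "HOL-Analysis.Analysis"
begin

text \<open>A complex Hilbert space is modelled as a real Hilbert space (real inner product,
complete) equipped with an orthogonal complex structure iJ (multiplication by the
imaginary unit). Complex scalar multiplication is then
(a + b i) x = a x + b (iJ x), and the complex inner product is determined by the real one
(its real part). Complex-linear operators are the real-linear ones commuting with iJ;
for these, the real Hilbert-space adjoint coincides with the complex adjoint, and
real-orthogonality of complex subspaces coincides with complex orthogonality.\<close>

class complex_hilbert = real_inner + complete_space +
  fixes iJ :: "'a \<Rightarrow> 'a"
  assumes iJ_add: "iJ (x + y) = iJ x + iJ y"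
    and iJ_scaleR: "iJ (r *\<^sub>R x) = r *\<^sub>R iJ x"
    and iJ_iJ: "iJ (iJ x) = - x"
    and iJ_inner: "inner (iJ x) (iJ y) = inner x y"

definition scaleC :: "complex \<Rightarrow> 'a::complex_hilbert \<Rightarrow> 'a" where
  "scaleC c x = Re c *\<^sub>R x + Im c *\<^sub>R iJ x"

definition clinear_op :: "('a::complex_hilbert \<Rightarrow> 'a) \<Rightarrow> bool" where
  "clinear_op T \<longleftrightarrow> bounded_linear T \<and> (\<forall>x. T (iJ x) = iJ (T x))"

definition isometry :: "('a::complex_hilbert \<Rightarrow> 'a) \<Rightarrow> bool" where
  "isometry V \<longleftrightarrow> clinear_op V \<and> (\<forall>x. norm (V x) = norm x)"

definition ker_op :: "('a::complex_hilbert \<Rightarrow> 'a) \<Rightarrow> 'a set" where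
  "ker_op T = {x. T x = 0}"

definition is_projection :: "('a::complex_hilbert \<Rightarrow> 'a) \<Rightarrow> bool" where
  "is_projection P \<longleftrightarrow> clinear_op P \<and> (\<forall>x. P (P x) = P x) \<and> adjoint P = P"

definition proj_onto :: "'a::complex_hilbert set \<Rightarrow> 'a \<Rightarrow> 'a" where
  "proj_onto M x = (THE y. y \<in> M \<and> (\<forall>z\<in>M. inner (x - y) z = 0))"

definition defect_op :: "('a::complex_hilbert \<Rightarrow> 'a) \<Rightarrow> ('a \<Rightarrow> 'a) \<Rightarrow> 'a \<Rightarrow> 'a" where
  "defect_op V1 V2 x = x - V1 (adjoint V1 x) - V2 (adjoint V2 x)
      + V1 (V2 (adjoint V2 (adjoint V1 x)))"

text \<open>Fringe operators F1 on ker V1*, F2 on ker V2* (given as functions; only their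
values on the respective kernels are relevant).\<close>
definition fringe1 :: "('a::complex_hilbert \<Rightarrow> 'a) \<Rightarrow> ('a \<Rightarrow> 'a) \<Rightarrow> 'a \<Rightarrow> 'a" where
  "fringe1 V1 V2 x = proj_onto (ker_op (adjoint V1)) (V2 x)"

definition fringe2 :: "('a::complex_hilbert \<Rightarrow> 'a) \<Rightarrow> ('a \<Rightarrow> 'a) \<Rightarrow> 'a \<Rightarrow> 'a" where
  "fringe2 V1 V2 x = proj_onto (ker_op (adjoint V2)) (V1 x)"

definition csubspace :: "'a::complex_hilbert set \<Rightarrow> bool" where
  "csubspace E \<longleftrightarrow> subspace E \<and> closed E \<and> (\<forall>x\<in>E. iJ x \<in> E)"

definition clinear_on :: "'a::complex_hilbert set \<Rightarrow> ('a \<Rightarrow> 'a) \<Rightarrow> bool" where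
  "clinear_on E T \<longleftrightarrow> T ` E \<subseteq> E \<and>
     (\<forall>x\<in>E. \<forall>y\<in>E. T (x + y) = T x + T y) \<and>
     (\<forall>x\<in>E. \<forall>r. T (r *\<^sub>R x) = r *\<^sub>R T x) \<and>
     (\<forall>x\<in>E. T (iJ x) = iJ (T x))"

definition proj_on :: "'a::complex_hilbert set \<Rightarrow> ('a \<Rightarrow> 'a) \<Rightarrow> bool" where
  "proj_on E P \<longleftrightarrow> clinear_on E P \<and> (\<forall>x\<in>E. P (P x) = P x) \<and>
     (\<forall>x\<in>E. \<forall>y\<in>E. inner (P x) y = inner x (P y))"

definition unitary_on :: "'a::complex_hilbert set \<Rightarrow> ('a \<Rightarrow> 'a) \<Rightarrow> bool" where
  "unitary_on E U \<longleftrightarrow> clinear_on E U \<and> U ` E = E \<and> (\<forall>x\<in>E. norm (U x) = norm x)"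

text \<open>H^2_D(E) is represented by Taylor coefficient sequences: f(z) = sum_n f_n z^n
with f_n in E and sum_n norm(f_n)^2 finite (the standard unitary identification
H^2_D(E) = l^2(N,E)).\<close>
definition hardy :: "'a::complex_hilbert set \<Rightarrow> (nat \<Rightarrow> 'a) set" where
  "hardy E = {f. (\<forall>n. f n \<in> E) \<and> summable (\<lambda>n. (norm (f n))\<^sup>2)}"

text \<open>Multiplication by the operator-valued polynomial phi(z) = A + z B on coefficient
sequences: (M_phi f)_n = A f_n + B f_(n-1), with f_(-1) = 0.\<close>
definition mult_op :: "('a \<Rightarrow> 'a) \<Rightarrow> ('a \<Rightarrow> 'a) \<Rightarrow> (nat \<Rightarrow> 'a) \<Rightarrow> nat \<Rightarrow> 'a::complex_hilbert" where
  "mult_op A B f n = A (f n) + (if n = 0 then 0 else B (f (n - 1)))"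

definition unitary_to_hardy ::
  "'a::complex_hilbert set \<Rightarrow> 'a set \<Rightarrow> ('a \<Rightarrow> nat \<Rightarrow> 'a) \<Rightarrow> bool" where
  "unitary_to_hardy Hp E W \<longleftrightarrow> W ` Hp = hardy E \<and>
     (\<forall>x\<in>Hp. \<forall>y\<in>Hp. W (x + y) = (\<lambda>n. W x n + W y n)) \<and>
     (\<forall>x\<in>Hp. \<forall>r. W (r *\<^sub>R x) = (\<lambda>n. r *\<^sub>R W x n)) \<and>
     (\<forall>x\<in>Hp. W (iJ x) = (\<lambda>n. iJ (W x n))) \<and>
     (\<forall>x\<in>Hp. (\<Sum>n. (norm (W x n))\<^sup>2) = (norm x)\<^sup>2)"

text \<open>(E,P,U) is a BCL triple for (V1,V2): there is a decomposition H = Hp (+) Hu into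
orthogonal closed subspaces jointly reducing V1, V2, with V1|Hu, V2|Hu unitaries, and
a unitary W : Hp -> H^2_D(E) with W V_i = M_phi_i W on Hp, where
phi1(z) = U*(P^perp + z P), phi2(z) = (P + z P^perp) U.
Here E is a closed subspace of the ambient space (any E is isomorphic to ker V*, a
subspace of H), P a projection on E and U a unitary on E; U* on E is the inverse
of U on E.\<close>
definition bcl_triple :: "('a::complex_hilbert \<Rightarrow> 'a) \<Rightarrow> ('a \<Rightarrow> 'a) \<Rightarrow>
    'a set \<Rightarrow> ('a \<Rightarrow> 'a) \<Rightarrow> ('a \<Rightarrow> 'a) \<Rightarrow> bool" where
  "bcl_triple V1 V2 E P U \<longleftrightarrow> csubspace E \<and> proj_on E P \<and> unitary_on E U \<and>
    (\<exists>Hp Hu W. csubspace Hp \<and> csubspace Hu \<and>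
       (\<forall>x\<in>Hp. \<forall>y\<in>Hu. inner x y = 0) \<and>
       (\<forall>z. \<exists>x\<in>Hp. \<exists>y\<in>Hu. z = x + y) \<and>
       V1 ` Hp \<subseteq> Hp \<and> V2 ` Hp \<subseteq> Hp \<and> V1 ` Hu \<subseteq> Hu \<and> V2 ` Hu \<subseteq> Hu \<and>
       adjoint V1 ` Hp \<subseteq> Hp \<and> adjoint V2 ` Hp \<subseteq> Hp \<and>
       adjoint V1 ` Hu \<subseteq> Hu \<and> adjoint V2 ` Hu \<subseteq> Hu \<and>
       V1 ` Hu = Hu \<and> V2 ` Hu = Hu \<and>
       unitary_to_hardy Hp E W \<and>
       (\<forall>x\<in>Hp. W (V1 x) =
          mult_op (\<lambda>e. inv_into E U (e - P e)) (\<lambda>e. inv_into E U (P e)) (W x)) \<and>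
       (\<forall>x\<in>Hp. W (V2 x) =
          mult_op (\<lambda>e. P (U e)) (\<lambda>e. U e - P (U e)) (W x)))"

end

theory Submission imports Defs begin
subclass (in complex_hilbert) banach ..

lemma parallelogram:
  fixes a b :: "'a::real_inner"
  shows "(norm (a - b))\<^sup>2 + (norm (a + b))\<^sup>2 = 2 * (norm a)\<^sup>2 + 2 * (norm b)\<^sup>2"
  by (simp add: power2_norm_eq_inner inner_diff_left inner_diff_right inner_add_left inner_add_right inner_commute)

lemma min_dist_point:
  fixes M :: "'a::complex_hilbert set"
  assumes sub: "subspace M" and cl: "closed M"
  shows "\<exists>y\<in>M. \<forall>m\<in>M. norm (x - y) \<le> norm (x - m)"
proof -
  define D where "D = (\<lambda>m. norm (x - m)) ` M"
  define d where "d = Inf D"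
  have ne: "D \<noteq> {}" using sub by (auto simp: D_def subspace_def)
  have bdd: "bdd_below D" unfolding D_def by (rule bdd_belowI[of _ 0]) auto
  have dle: "d \<le> norm (x - m)" if "m \<in> M" for m
    unfolding d_def D_def using that bdd by (auto intro!: cInf_lower simp: D_def)
  have d0: "0 \<le> d" unfolding d_def using ne by (auto intro!: cInf_greatest simp: D_def)
  have "\<forall>n::nat. \<exists>m\<in>M. norm (x - m) < d + 1 / (real n + 1)"
  proof
    fix n :: nat
    have "Inf D < d + 1 / (real n + 1)" unfolding d_def by (simp add: add_pos_pos)
    then obtain t where "t \<in> D" "t < d + 1 / (real n + 1)" using cInf_lessD[OF ne] by blast
    then show "\<exists>m\<in>M. norm (x - m) < d + 1 / (real n + 1)" by (auto simp: D_def)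
  qed
  then obtain ms where ms: "\<And>n. ms n \<in> M" "\<And>n. norm (x - ms n) < d + 1 / (real n + 1)"
    by metis
  have key: "(norm (ms n - ms k))\<^sup>2 \<le> 2 * (d + 1 / (real n + 1))\<^sup>2 + 2 * (d + 1 / (real k + 1))\<^sup>2 - 4 * d\<^sup>2" for n k
  proof -
    have mid: "(1/2) *\<^sub>R (ms n + ms k) \<in> M"
      using sub ms(1) by (simp add: subspace_add subspace_mul)
    have "2 * d \<le> 2 * norm (x - (1/2) *\<^sub>R (ms n + ms k))" using dle[OF mid] by simp
    also have "2 * norm (x - (1/2) *\<^sub>R (ms n + ms k)) = norm ((x - ms k) + (x - ms n))"
    proof -
      have "(x - ms k) + (x - ms n) = 2 *\<^sub>R (x - (1/2) *\<^sub>R (ms n + ms k))"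
        by (simp add: algebra_simps scaleR_2)
      then show ?thesis by simp
    qed
    finally have h1: "2 * d \<le> norm ((x - ms k) + (x - ms n))" .
    have h2: "(2*d)\<^sup>2 \<le> (norm ((x - ms k) + (x - ms n)))\<^sup>2"
      using h1 d0 by (intro power_mono) auto
    have par: "(norm ((x - ms k) - (x - ms n)))\<^sup>2 + (norm ((x - ms k) + (x - ms n)))\<^sup>2 = 2 * (norm (x - ms k))\<^sup>2 + 2 * (norm (x - ms n))\<^sup>2"
      by (rule parallelogram)
    have e: "(x - ms k) - (x - ms n) = ms n - ms k" by simp
    have a1: "(norm (x - ms n))\<^sup>2 \<le> (d + 1 / (real n + 1))\<^sup>2"
      using ms(2)[of n] by (intro power_mono) auto
    have a2: "(norm (x - ms k))\<^sup>2 \<le> (d + 1 / (real k + 1))\<^sup>2"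
      using ms(2)[of k] by (intro power_mono) auto
    show ?thesis using par h2 a1 a2 unfolding e by (simp add: power_mult_distrib)
  qed
  have cauchy: "Cauchy ms"
  proof (rule metric_CauchyI)
    fix e :: real assume e: "e > 0"
    define t where "t = min 1 (e\<^sup>2 / (2 * (8 * d + 4)))"
    have tpos: "t > 0" using e d0 by (auto simp: t_def)
    obtain N :: nat where N: "1 / (real N + 1) < t"
      using reals_Archimedean[OF tpos] by (metis inverse_eq_divide of_nat_Suc add.commute)
    show "\<exists>N. \<forall>m\<ge>N. \<forall>n\<ge>N. dist (ms m) (ms n) < e"
    proof (intro exI allI impI)
      fix m n assume mN: "N \<le> m" and nN: "N \<le> n"
      have em: "1 / (real m + 1) \<le> t" and en: "1 / (real n + 1) \<le> t"
        using N mN nN by (auto intro: order.trans[OF _ less_imp_le[OF N]] simp: frac_le)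
      have t1: "t \<le> 1" and t2: "t \<le> e\<^sup>2 / (2 * (8 * d + 4))" by (auto simp: t_def)
      have "(norm (ms m - ms n))\<^sup>2 \<le> 2 * (d + 1 / (real m + 1))\<^sup>2 + 2 * (d + 1 / (real n + 1))\<^sup>2 - 4 * d\<^sup>2"
        by (rule key)
      also have "\<dots> \<le> 2 * (d + t)\<^sup>2 + 2 * (d + t)\<^sup>2 - 4 * d\<^sup>2"
        using em en d0 by (intro diff_mono add_mono mult_left_mono power_mono) auto
      also have "\<dots> = 8 * d * t + 4 * t * t" by (simp add: power2_eq_square algebra_simps)
      also have "\<dots> \<le> (8 * d + 4) * t" using t1 tpos d0 by (simp add: algebra_simps mult_left_mono)
      also have "\<dots> \<le> e\<^sup>2 / 2" using t2 d0 by (simp add: pos_le_divide_eq algebra_simps)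
      also have "\<dots> < e\<^sup>2" using e by simp
      finally have "(norm (ms m - ms n))\<^sup>2 < e\<^sup>2" .
      then have "norm (ms m - ms n) < e" using e by (simp add: power2_less_imp_less)
      then show "dist (ms m) (ms n) < e" by (simp add: dist_norm)
    qed
  qed
  then obtain y where y: "ms \<longlonglongrightarrow> y" using Cauchy_convergent_iff convergent_def by blast
  have yM: "y \<in> M" using closed_sequentially[OF cl] ms(1) y by blast
  have l1: "(\<lambda>n. norm (x - ms n)) \<longlonglongrightarrow> norm (x - y)"
    by (intro tendsto_intros y)
  have l2: "(\<lambda>n. d + inverse (real (Suc n))) \<longlonglongrightarrow> d"
    by (rule LIMSEQ_inverse_real_of_nat_add)
  have "norm (x - y) \<le> d"
  proof (rule LIMSEQ_le[OF l1 l2])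
    show "\<exists>N. \<forall>n\<ge>N. norm (x - ms n) \<le> d + inverse (real (Suc n))"
      using ms(2) by (auto intro!: less_imp_le simp: inverse_eq_divide add.commute)
  qed
  then show ?thesis using yM dle by (meson order.trans)
qed

lemma proj_exists:
  fixes M :: "'a::complex_hilbert set"
  assumes sub: "subspace M" and cl: "closed M"
  shows "\<exists>y\<in>M. \<forall>z\<in>M. inner (x - y) z = 0"
proof -
  obtain y where yM: "y \<in> M" and ymin: "\<And>m. m \<in> M \<Longrightarrow> norm (x - y) \<le> norm (x - m)"
    using min_dist_point[OF sub cl] by blast
  have "inner (x - y) z = 0" if zM: "z \<in> M" for z
  proof (cases "z = 0")
    case True then show ?thesis by simp
  next
    case False
    define c where "c = inner (x - y) z"
    define t where "t = c / inner z z"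
    have zz: "inner z z > 0" using False by simp
    have "y + t *\<^sub>R z \<in> M" using sub yM zM by (simp add: subspace_add subspace_mul)
    then have "norm (x - y) \<le> norm (x - (y + t *\<^sub>R z))" by (rule ymin)
    then have "(norm (x - y))\<^sup>2 \<le> (norm ((x - y) - t *\<^sub>R z))\<^sup>2"
      by (simp add: power_mono algebra_simps)
    also have "\<dots> = (norm (x - y))\<^sup>2 - 2 * t * c + t * t * inner z z"
      by (simp add: power2_norm_eq_inner inner_diff_left inner_diff_right c_def inner_commute algebra_simps)
    finally have "2 * t * c \<le> t * t * inner z z" by simp
    then have "2 * c * c / inner z z \<le> c * c / inner z z"
      using zz by (simp add: t_def field_simps power2_eq_square)
    then have "c * c \<le> 0" using zz by (simp add: divide_le_cancel)
    then have "c = 0" by (simp add: mult_le_0_iff) (use antisym in blast)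
    then show ?thesis by (simp add: c_def)
  qed
  then show ?thesis using yM by blast
qed

lemma riesz:
  fixes f :: "'a::complex_hilbert \<Rightarrow> real"
  assumes bl: "bounded_linear f"
  shows "\<exists>r. \<forall>x. f x = inner x r"
proof (cases "\<forall>x. f x = 0")
  case True then show ?thesis by (intro exI[of _ 0]) simp
next
  case False
  then obtain x0 where fx0: "f x0 \<noteq> 0" by blast
  interpret f: bounded_linear f by (rule bl)
  define M where "M = {x. f x = 0}"
  have sub: "subspace M" unfolding M_def subspace_def by (simp add: f.add f.scaleR f.zero)
  have cl: "closed M" unfolding M_def
    by (intro closed_Collect_eq continuous_intros f.continuous_on continuous_on_id)
  obtain y where yM: "y \<in> M" and yo: "\<And>w. w \<in> M \<Longrightarrow> inner (x0 - y) w = 0"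
    using proj_exists[OF sub cl] by blast
  define z where "z = x0 - y"
  have fz: "f z = f x0" using yM by (simp add: z_def M_def f.diff)
  then have fz0: "f z \<noteq> 0" using fx0 by simp
  then have "z \<noteq> 0" by auto
  then have zz: "inner z z \<noteq> 0" by simp
  show ?thesis
  proof (intro exI allI)
    fix x
    define w where "w = x - (f x / f z) *\<^sub>R z"
    have "f w = 0" using fz0 by (simp add: w_def f.diff f.scaleR)
    then have "inner z w = 0" using yo[of w] by (simp add: M_def z_def)
    then have "inner x z = (f x / f z) * inner z z"
      by (simp add: w_def inner_diff_right inner_commute)
    then show "f x = inner x ((f z / inner z z) *\<^sub>R z)"
      using fz0 zz by (simp add: field_simps)
  qed
qed

lemma adjoint_exists:
  fixes T :: "'a::complex_hilbert \<Rightarrow> 'a"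
  assumes bl: "bounded_linear T"
  shows "\<forall>x y. inner (T x) y = inner x (adjoint T y)"
proof -
  have "\<forall>y. \<exists>r. \<forall>x. inner (T x) y = inner x r"
  proof
    fix y
    have "bounded_linear (\<lambda>x. inner (T x) y)"
      by (rule bounded_linear_compose[OF bounded_linear_inner_left bl])
    then show "\<exists>r. \<forall>x. inner (T x) y = inner x r" by (rule riesz)
  qed
  then obtain g where g: "\<forall>y x. inner (T x) y = inner x (g y)" by metis
  then have "\<exists>g. \<forall>x y. inner (T x) y = inner x (g y)" by blast
  then show ?thesis unfolding adjoint_def by (rule someI_ex)
qed

lemma adjoint_bl:
  fixes T :: "'a::complex_hilbert \<Rightarrow> 'a"
  assumes bl: "bounded_linear T"
  shows "bounded_linear (adjoint T)"
proof -
  have adj: "\<And>x y. inner (T x) y = inner x (adjoint T y)" using adjoint_exists[OF bl] by blast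
  interpret T: bounded_linear T by (rule bl)
  obtain K where K: "\<And>x. norm (T x) \<le> norm x * K" "K > 0" using T.pos_bounded by blast
  have lin: "linear (adjoint T)"
  proof
    fix a b
    show "adjoint T (a + b) = adjoint T a + adjoint T b"
      by (rule vector_eq_ldot[THEN iffD1]) (metis adj inner_add_right)
  next
    fix r and a :: 'a
    show "adjoint T (r *\<^sub>R a) = r *\<^sub>R adjoint T a"
      by (rule vector_eq_ldot[THEN iffD1]) (metis adj inner_scaleR_right)
  qed
  have bnd: "norm (adjoint T y) \<le> norm y * K" for y
  proof -
    have "(norm (adjoint T y))\<^sup>2 = inner (T (adjoint T y)) y"
      by (simp add: adj power2_norm_eq_inner)
    also have "\<dots> \<le> norm (T (adjoint T y)) * norm y" by (rule norm_cauchy_schwarz)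
    also have "\<dots> \<le> norm (adjoint T y) * K * norm y" using K by (simp add: mult_right_mono)
    finally have "(norm (adjoint T y))\<^sup>2 \<le> norm (adjoint T y) * (norm y * K)" by (simp add: algebra_simps)
    then show ?thesis
      by (cases "norm (adjoint T y) = 0") (use K(2) in \<open>auto simp: power2_eq_square\<close>)
  qed
  show ?thesis using lin bnd by (intro bounded_linear_intro[of _ K]) (auto simp: linear_iff)
qed

lemma iJ_linear: "linear (iJ :: 'a::complex_hilbert \<Rightarrow> 'a)"
  by (rule linearI) (simp_all add: iJ_add iJ_scaleR)

lemma iJ_simps[simp]:
  fixes x y :: "'a::complex_hilbert"
  shows "iJ (x + y) = iJ x + iJ y" "iJ (r *\<^sub>R x) = r *\<^sub>R iJ x" "iJ (iJ x) = - x"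
    "iJ 0 = 0" "iJ (x - y) = iJ x - iJ y" "iJ (- x) = - iJ x"
  using iJ_add iJ_scaleR iJ_iJ linear_0[OF iJ_linear] linear_diff[OF iJ_linear] linear_neg[OF iJ_linear]
  by auto

lemma inner_iJ_right: "inner x (iJ y) = - inner (iJ x) (y::'a::complex_hilbert)"
  using iJ_inner[of x "iJ y"] by simp

lemma clinear_adjoint:
  fixes T :: "'a::complex_hilbert \<Rightarrow> 'a"
  assumes "clinear_op T"
  shows "clinear_op (adjoint T)"
proof -
  have bl: "bounded_linear T" and c: "\<And>x. T (iJ x) = iJ (T x)" using assms by (auto simp: clinear_op_def)
  have adj: "\<And>x y. inner (T x) y = inner x (adjoint T y)" using adjoint_exists[OF bl] by blast
  have "adjoint T (iJ y) = iJ (adjoint T y)" for y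
    by (rule vector_eq_ldot[THEN iffD1]) (metis adj inner_iJ_right c)
  then show ?thesis using adjoint_bl[OF bl] by (simp add: clinear_op_def)
qed

lemma isometry_inner:
  assumes "isometry V"
  shows "inner (V x) (V y) = inner x (y::'a::complex_hilbert)"
proof -
  interpret bounded_linear V using assms by (simp add: isometry_def clinear_op_def)
  have n: "\<And>z. norm (V z) = norm z" using assms by (simp add: isometry_def)
  have "inner (V x) (V y) = ((norm (V x + V y))\<^sup>2 - (norm (V x - V y))\<^sup>2) / 4"
    by (simp add: power2_norm_eq_inner inner_add_left inner_add_right inner_diff_left inner_diff_right inner_commute)
  also have "\<dots> = ((norm (x + y))\<^sup>2 - (norm (x - y))\<^sup>2) / 4"
    by (simp only: add[symmetric] diff[symmetric] n)
  also have "\<dots> = inner x y"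
    by (simp add: power2_norm_eq_inner inner_add_left inner_add_right inner_diff_left inner_diff_right inner_commute)
  finally show ?thesis .
qed

lemma isometry_adj_left:
  assumes "isometry V"
  shows "adjoint V (V x) = (x::'a::complex_hilbert)"
proof -
  have bl: "bounded_linear V" using assms by (simp add: isometry_def clinear_op_def)
  have adj: "\<And>x y. inner (V x) y = inner x (adjoint V y)" using adjoint_exists[OF bl] by blast
  show ?thesis
    by (rule vector_eq_ldot[THEN iffD1]) (metis adj isometry_inner[OF assms])
qed

locale cpair =
  fixes V1 V2 :: "'a::complex_hilbert \<Rightarrow> 'a"
  assumes iso1: "isometry V1" and iso2: "isometry V2" and comm: "V1 \<circ> V2 = V2 \<circ> V1"
begin

abbreviation "V1s \<equiv> adjoint V1"
abbreviation "V2s \<equiv> adjoint V2"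
abbreviation "Vm \<equiv> V1 \<circ> V2"
abbreviation "Vs \<equiv> adjoint (V1 \<circ> V2)"

lemma cl1: "clinear_op V1" and cl2: "clinear_op V2" using iso1 iso2 by (auto simp: isometry_def)
lemma bl1: "bounded_linear V1" and bl2: "bounded_linear V2" using cl1 cl2 by (auto simp: clinear_op_def)
lemma cl1s: "clinear_op V1s" and cl2s: "clinear_op V2s" using cl1 cl2 clinear_adjoint by auto
lemma bl1s: "bounded_linear V1s" and bl2s: "bounded_linear V2s" using cl1s cl2s by (auto simp: clinear_op_def)

lemma adj1: "inner (V1 x) y = inner x (V1s y)" using adjoint_exists[OF bl1] by blast
lemma adj2: "inner (V2 x) y = inner x (V2s y)" using adjoint_exists[OF bl2] by blast

lemma comm_pt: "V1 (V2 x) = V2 (V1 x)" using comm by (metis comp_apply)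

lemma lin_simps[simp]:
  "V1 (x + y) = V1 x + V1 y" "V1 (x - y) = V1 x - V1 y" "V1 (r *\<^sub>R x) = r *\<^sub>R V1 x" "V1 0 = 0" "V1 (- x) = - V1 x"
  "V2 (x + y) = V2 x + V2 y" "V2 (x - y) = V2 x - V2 y" "V2 (r *\<^sub>R x) = r *\<^sub>R V2 x" "V2 0 = 0" "V2 (- x) = - V2 x"
  "V1s (x + y) = V1s x + V1s y" "V1s (x - y) = V1s x - V1s y" "V1s (r *\<^sub>R x) = r *\<^sub>R V1s x" "V1s 0 = 0" "V1s (- x) = - V1s x"
  "V2s (x + y) = V2s x + V2s y" "V2s (x - y) = V2s x - V2s y" "V2s (r *\<^sub>R x) = r *\<^sub>R V2s x" "V2s 0 = 0" "V2s (- x) = - V2s x"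
  "V1 (iJ x) = iJ (V1 x)" "V2 (iJ x) = iJ (V2 x)" "V1s (iJ x) = iJ (V1s x)" "V2s (iJ x) = iJ (V2s x)"
proof -
  interpret a: bounded_linear V1 by (rule bl1)
  interpret b: bounded_linear V2 by (rule bl2)
  interpret c: bounded_linear V1s by (rule bl1s)
  interpret d: bounded_linear V2s by (rule bl2s)
  show  "V1 (x + y) = V1 x + V1 y" "V1 (x - y) = V1 x - V1 y" "V1 (r *\<^sub>R x) = r *\<^sub>R V1 x" "V1 0 = 0" "V1 (- x) = - V1 x"
  "V2 (x + y) = V2 x + V2 y" "V2 (x - y) = V2 x - V2 y" "V2 (r *\<^sub>R x) = r *\<^sub>R V2 x" "V2 0 = 0" "V2 (- x) = - V2 x"
  "V1s (x + y) = V1s x + V1s y" "V1s (x - y) = V1s x - V1s y" "V1s (r *\<^sub>R x) = r *\<^sub>R V1s x" "V1s 0 = 0" "V1s (- x) = - V1s x"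
  "V2s (x + y) = V2s x + V2s y" "V2s (x - y) = V2s x - V2s y" "V2s (r *\<^sub>R x) = r *\<^sub>R V2s x" "V2s 0 = 0" "V2s (- x) = - V2s x"
    by (simp_all add: a.add a.diff a.scaleR a.neg b.add b.diff b.scaleR b.neg c.add c.diff c.scaleR c.neg d.add d.diff d.scaleR d.neg)
  show "V1 (iJ x) = iJ (V1 x)" "V2 (iJ x) = iJ (V2 x)" "V1s (iJ x) = iJ (V1s x)" "V2s (iJ x) = iJ (V2s x)"
    using cl1 cl2 cl1s cl2s by (auto simp: clinear_op_def)
qed

lemma left_inv[simp]: "V1s (V1 x) = x" "V2s (V2 x) = x"
  using isometry_adj_left[OF iso1] isometry_adj_left[OF iso2] by auto

lemma norm_iso[simp]: "norm (V1 x) = norm x" "norm (V2 x) = norm x"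
  using iso1 iso2 by (auto simp: isometry_def)

lemma inner_iso[simp]: "inner (V1 x) (V1 y) = inner x y" "inner (V2 x) (V2 y) = inner x y"
  using isometry_inner[OF iso1] isometry_inner[OF iso2] by auto

lemma adj_comm: "V1s (V2s x) = V2s (V1s x)"
  by (rule vector_eq_ldot[THEN iffD1]) (metis adj1 adj2 comm_pt)

lemma Vs_eq: "Vs x = V2s (V1s x)"
proof -
  have "adjoint (V1 \<circ> V2) = (\<lambda>x. V2s (V1s x))"
    by (rule adjoint_unique) (simp add: adj1 adj2)
  then show ?thesis by simp
qed

lemma Vs_eq': "Vs x = V1s (V2s x)" by (simp add: Vs_eq adj_comm)

lemma sym: "cpair V2 V1" using iso1 iso2 comm by unfold_locales auto

abbreviation "Q1 x \<equiv> x - V1 (V1s x)"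
abbreviation "K1 \<equiv> ker_op V1s"
abbreviation "K2 \<equiv> ker_op V2s"
abbreviation "EE \<equiv> ker_op Vs"

lemma Q1_simps[simp]: "V1s (Q1 x) = 0" "Q1 (V1 x) = 0"
  by simp_all

lemma adj1': "inner x (V1 y) = inner (V1s x) y" by (metis adj1 inner_commute)
lemma adj2': "inner x (V2 y) = inner (V2s x) y" by (metis adj2 inner_commute)

lemma Q1_sym: "inner (Q1 x) y = inner x (Q1 y)"
proof -
  have "inner (V1 (V1s x)) y = inner (V1s x) (V1s y)" by (rule adj1)
  moreover have "inner x (V1 (V1s y)) = inner (V1s x) (V1s y)" by (rule adj1')
  ultimately show ?thesis by (simp add: inner_diff_left inner_diff_right)
qed

lemma range1_char: "y \<in> range V1 \<longleftrightarrow> V1 (V1s y) = y"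
proof
  assume "y \<in> range V1" then show "V1 (V1s y) = y" by auto
next
  assume "V1 (V1s y) = y" then show "y \<in> range V1" by (metis rangeI)
qed

lemma K1_char: "x \<in> K1 \<longleftrightarrow> (\<forall>z. inner (V1 z) x = 0)"
proof
  assume "x \<in> K1" then show "\<forall>z. inner (V1 z) x = 0" by (simp add: adj1 ker_op_def)
next
  assume "\<forall>z. inner (V1 z) x = 0"
  then have "inner (V1s x) (V1s x) = 0" by (metis adj1)
  then show "x \<in> K1" by (simp add: ker_op_def)
qed

lemma range1_perp: "y \<in> range V1 \<longleftrightarrow> (\<forall>k\<in>K1. inner y k = 0)"
proof
  assume "y \<in> range V1" then show "\<forall>k\<in>K1. inner y k = 0"
    by (auto simp: adj1 ker_op_def)
next
  assume h: "\<forall>k\<in>K1. inner y k = 0"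
  have "Q1 y \<in> K1" by (simp add: ker_op_def)
  then have "inner y (Q1 y) = 0" using h by blast
  then have "inner (Q1 y) (Q1 y) = 0"
    by (simp add: inner_diff_left adj1)
  then show "y \<in> range V1" using range1_char by simp
qed

lemma K1_sub_E: "K1 \<subseteq> EE" by (auto simp: ker_op_def Vs_eq)
lemma K2_sub_E: "K2 \<subseteq> EE" by (auto simp: ker_op_def Vs_eq')

lemma V1K2: "V1 ` K2 = range V1 \<inter> EE"
proof
  show "V1 ` K2 \<subseteq> range V1 \<inter> EE" by (auto simp: ker_op_def Vs_eq)
next
  show "range V1 \<inter> EE \<subseteq> V1 ` K2"
  proof
    fix y assume "y \<in> range V1 \<inter> EE"
    then obtain z where "y = V1 z" "Vs y = 0" by (auto simp: ker_op_def)
    then have "V2s z = 0" by (simp add: Vs_eq)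
    then show "y \<in> V1 ` K2" using \<open>y = V1 z\<close> by (auto simp: ker_op_def)
  qed
qed

lemma range21: "V2 ` K1 \<subseteq> range V1 \<Longrightarrow> range V2 \<subseteq> range V1"
proof
  assume h: "V2 ` K1 \<subseteq> range V1"
  fix y assume "y \<in> range V2"
  then obtain x where y: "y = V2 x" by auto
  have "Q1 x \<in> K1" by (simp add: ker_op_def)
  then obtain w where w: "V2 (Q1 x) = V1 w" using h by blast
  have "y = V2 (Q1 x) + V2 (V1 (V1s x))" by (simp add: y)
  also have "\<dots> = V1 w + V1 (V2 (V1s x))" by (simp only: w comm_pt)
  also have "\<dots> = V1 (w + V2 (V1s x))" by simp
  finally show "y \<in> range V1" by (metis rangeI)
qed

lemma proj_onto_K1: "proj_onto K1 y = Q1 y"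
  unfolding proj_onto_def
proof (rule the_equality)
  show "Q1 y \<in> K1 \<and> (\<forall>z\<in>K1. inner (y - Q1 y) z = 0)"
    by (simp add: ker_op_def adj1)
next
  fix z assume h: "z \<in> K1 \<and> (\<forall>w\<in>K1. inner (y - z) w = 0)"
  have k: "Q1 y - z \<in> K1" using h by (simp add: ker_op_def)
  then have "inner (y - z) (Q1 y - z) = 0" using h by blast
  moreover have "inner (V1 (V1s y)) (Q1 y - z) = 0" using k by (simp add: adj1 ker_op_def)
  ultimately have "inner (Q1 y - z) (Q1 y - z) = 0"
    by (simp add: inner_diff_left inner_diff_right algebra_simps)
  then show "z = Q1 y" by simp
qed

lemma fringe_char: "(\<forall>x\<in>K1. proj_onto K1 (V2 x) = 0) \<longleftrightarrow> range V2 \<subseteq> range V1"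
proof
  assume "\<forall>x\<in>K1. proj_onto K1 (V2 x) = 0"
  then have "V2 ` K1 \<subseteq> range V1" by (auto simp: proj_onto_K1 range1_char)
  then show "range V2 \<subseteq> range V1" by (rule range21)
next
  assume h: "range V2 \<subseteq> range V1"
  show "\<forall>x\<in>K1. proj_onto K1 (V2 x) = 0"
  proof
    fix x assume "x \<in> K1"
    have "V2 x \<in> range V1" using h by auto
    then have "V1 (V1s (V2 x)) = V2 x" using range1_char by blast
    then show "proj_onto K1 (V2 x) = 0" by (simp add: proj_onto_K1)
  qed
qed

lemma bl_Q1: "bounded_linear (\<lambda>x. Q1 x)"
  by (intro bounded_linear_sub bounded_linear_ident bounded_linear_compose[OF bl1 bl1s])

lemma bl_B: "bounded_linear (\<lambda>x. V2 (Q1 (V2s x)))"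
  by (intro bounded_linear_compose[OF bl2] bounded_linear_compose[OF bl_Q1 bl2s])

lemma proj_Q1: "is_projection (\<lambda>x. Q1 x)"
  unfolding is_projection_def clinear_op_def
proof (intro conjI allI)
  show "adjoint (\<lambda>x. Q1 x) = (\<lambda>x. Q1 x)" by (rule adjoint_unique) (simp add: Q1_sym)
qed (simp_all add: bl_Q1)

lemma B_sym: "inner (V2 (Q1 (V2s x))) y = inner x (V2 (Q1 (V2s y)))"
  by (simp only: adj2 adj2' Q1_sym)

lemma proj_B: "is_projection (\<lambda>x. V2 (Q1 (V2s x)))"
  unfolding is_projection_def clinear_op_def
proof (intro conjI allI)
  show "adjoint (\<lambda>x. V2 (Q1 (V2s x))) = (\<lambda>x. V2 (Q1 (V2s x)))" by (rule adjoint_unique) (intro allI, rule B_sym)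
qed (rule bl_B | simp)+

lemma defect_eq: "defect_op V1 V2 x = Q1 x - V2 (Q1 (V2s x))"
  by (simp add: defect_op_def comm_pt adj_comm)

lemma is_proj_facts:
  assumes "is_projection P"
  shows "inner (P x) y = inner x (P y)" "P (P x) = P x" "linear P"
proof -
  have bl: "bounded_linear P" using assms by (simp add: is_projection_def clinear_op_def)
  show "inner (P x) y = inner x (P y)" using adjoint_exists[OF bl] assms by (simp add: is_projection_def)
  show "P (P x) = P x" using assms by (simp add: is_projection_def)
  show "linear P" using bl by (simp add: bounded_linear.linear)
qed

lemma c_forward:
  assumes a: "range V1 = range V2"
  shows "\<exists>P1 P2. is_projection P1 \<and> is_projection P2 \<and> (\<forall>x. P1 (P2 x) = 0) \<and>
           defect_op V1 V2 = (\<lambda>x. P1 x - P2 x) \<and>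
           {a + b | a b. a \<in> range P1 \<and> b \<in> range P2} = EE"
proof (intro exI conjI)
  show "is_projection (\<lambda>x. Q1 x)" by (rule proj_Q1)
  show "is_projection (\<lambda>x. V2 (Q1 (V2s x)))" by (rule proj_B)
  show "\<forall>x. Q1 (V2 (Q1 (V2s x))) = 0"
  proof
    fix x
    have "V2 (Q1 (V2s x)) \<in> range V1" unfolding a by (rule rangeI)
    then have eq: "V1 (V1s (V2 (Q1 (V2s x)))) = V2 (Q1 (V2s x))" using range1_char by blast
    show "Q1 (V2 (Q1 (V2s x))) = 0" by (simp only: eq diff_self)
  qed
  show "defect_op V1 V2 = (\<lambda>x. Q1 x - V2 (Q1 (V2s x)))" by (rule ext) (rule defect_eq)
  have b1: "V1 ` K2 = range V1 \<inter> EE" by (rule V1K2)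
  have "V2 ` K1 = range V2 \<inter> ker_op (adjoint (V2 \<circ> V1))" by (rule cpair.V1K2[OF sym])
  then have b2: "V2 ` K1 = range V2 \<inter> EE" by (simp only: comm)
  have b: "V1 ` K2 = V2 ` K1" by (simp only: b1 b2 a)
  show "{a + b | a b. a \<in> range (\<lambda>x. Q1 x) \<and> b \<in> range (\<lambda>x. V2 (Q1 (V2s x)))} = EE"
  proof
    show "{a + b | a b. a \<in> range (\<lambda>x. Q1 x) \<and> b \<in> range (\<lambda>x. V2 (Q1 (V2s x)))} \<subseteq> EE"
    proof
      fix z assume "z \<in> {a + b | a b. a \<in> range (\<lambda>x. Q1 x) \<and> b \<in> range (\<lambda>x. V2 (Q1 (V2s x)))}"
      then obtain a b where ab: "z = a + b" "a \<in> range (\<lambda>x. Q1 x)" "b \<in> range (\<lambda>x. V2 (Q1 (V2s x)))"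
        by (simp only: mem_Collect_eq) (elim exE conjE, blast)
      obtain u where u: "a = Q1 u" using ab(2) by (elim rangeE) simp
      obtain v where v: "b = V2 (Q1 (V2s v))" using ab(3) by (elim rangeE) simp
      have z: "z = Q1 u + V2 (Q1 (V2s v))" using ab(1) u v by (simp only:)
      have "V2s (V1s (V2 (Q1 (V2s v)))) = V1s (V2s (V2 (Q1 (V2s v))))" by (rule adj_comm[symmetric])
      also have "\<dots> = 0" by (simp only: left_inv Q1_simps)
      finally have "V2s (V1s (V2 (Q1 (V2s v)))) = 0" .
      then show "z \<in> EE" unfolding z ker_op_def Vs_eq
        by (simp only: lin_simps Q1_simps mem_Collect_eq) simp
    qed
  next
    show "EE \<subseteq> {a + b | a b. a \<in> range (\<lambda>x. Q1 x) \<and> b \<in> range (\<lambda>x. V2 (Q1 (V2s x)))}"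
    proof
      fix x assume x: "x \<in> EE"
      have "V2s (V1s x) = 0" using x unfolding ker_op_def mem_Collect_eq Vs_eq .
      then have "V1s x \<in> K2" unfolding ker_op_def mem_Collect_eq .
      then have "V1 (V1s x) \<in> V1 ` K2" by (rule imageI)
      then have "V1 (V1s x) \<in> V2 ` K1" unfolding b .
      then obtain k where k: "k \<in> K1" and kx: "V1 (V1s x) = V2 k" by (elim imageE)
      have v: "V1s k = 0" using k unfolding ker_op_def mem_Collect_eq .
      have kk: "V2 (Q1 (V2s (V2 k))) = V2 k" by (simp only: left_inv v lin_simps diff_zero)
      have r: "V1 (V1s x) \<in> range (\<lambda>x. V2 (Q1 (V2s x)))" unfolding kx using kk[symmetric] by (rule range_eqI)
      have r1: "Q1 x \<in> range (\<lambda>x. Q1 x)" by (rule rangeI)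
      have e: "x = Q1 x + V1 (V1s x)" by simp
      show "x \<in> {a + b | a b. a \<in> range (\<lambda>x. Q1 x) \<and> b \<in> range (\<lambda>x. V2 (Q1 (V2s x)))}"
        unfolding mem_Collect_eq by (rule exI[of _ "Q1 x"], rule exI[of _ "V1 (V1s x)"], intro conjI e r r1)
    qed
  qed
qed

lemma c_backward:
  assumes P1: "is_projection P1" and P2: "is_projection P2" and o: "\<forall>x. P1 (P2 x) = 0"
    and C: "defect_op V1 V2 = (\<lambda>x. P1 x - P2 x)"
    and R: "{a + b | a b. a \<in> range P1 \<and> b \<in> range P2} = EE"
  shows "range V1 = range V2"
proof -
  have s1: "\<And>x y. inner (P1 x) y = inner x (P1 y)" and i1: "\<And>x. P1 (P1 x) = P1 x" and l1: "linear P1"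
    using is_proj_facts[OF P1] by auto
  have s2: "\<And>x y. inner (P2 x) y = inner x (P2 y)" and i2: "\<And>x. P2 (P2 x) = P2 x" and l2: "linear P2"
    using is_proj_facts[OF P2] by auto
  have o2: "P2 (P1 x) = 0" for x
  proof -
    have "inner (P2 (P1 x)) (P2 (P1 x)) = inner x (P1 (P2 (P2 (P1 x))))" by (simp only: s1 s2)
    then show ?thesis using o by simp
  qed
  define B where "B x = V2 (Q1 (V2s x))" for x
  have Cx: "Q1 x - B x = P1 x - P2 x" for x
    unfolding B_def by (subst defect_eq[symmetric]) (simp add: C)
  have CC: "P1 (P1 x - P2 x) - P2 (P1 x - P2 x) = x" if "x \<in> EE" for x
  proof -
    have "x \<in> {a + b | a b. a \<in> range P1 \<and> b \<in> range P2}" using that unfolding R .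
    then obtain a b where ab: "x = a + b" "a \<in> range P1" "b \<in> range P2"
      by (simp only: mem_Collect_eq) (elim exE conjE, blast)
    obtain u where u: "a = P1 u" using ab(2) by blast
    obtain v where v: "b = P2 v" using ab(3) by blast
    have x: "x = P1 u + P2 v" using ab(1) u v by (simp only:)
    show ?thesis unfolding x
      by (simp add: linear_add[OF l1] linear_add[OF l2] linear_diff[OF l1] linear_diff[OF l2] i1 i2 o o2)
  qed
  have CC': "Q1 (Q1 x - B x) - B (Q1 x - B x) = x" if "x \<in> EE" for x
    using CC[OF that] by (simp only: Cx[symmetric])
  have BB: "B (B x) = B x" for x unfolding B_def by simp
  have Bsym: "inner (B x) y = inner x (B y)" for x y unfolding B_def by (rule B_sym)
  have BQ: "B (Q1 x) = 0" for x
  proof -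
    define k where "k = Q1 x"
    have kK: "k \<in> K1" by (simp add: k_def ker_op_def)
    then have kE: "k \<in> EE" using K1_sub_E by blast
    have Qk: "Q1 k = k" using kK by (simp add: ker_op_def)
    have h: "Q1 (Q1 k - B k) - B (Q1 k - B k) = k" by (rule CC'[OF kE])
    have v: "V1s k = 0" using kK by (simp add: ker_op_def)
    have Bdiff: "B (a - b) = B a - B b" for a b unfolding B_def by simp
    have h2: "Q1 (k - B k) - B (k - B k) = k" using h by (simp only: Qk)
    have h3: "B (k - B k) = 0" by (simp only: Bdiff BB diff_self)
    have e: "(k - B k) - V1 (V1s (k - B k)) = k" using h2 by (simp only: h3 diff_zero)
    have e2: "V1 (V1s (k - B k)) = - V1 (V1s (B k))" using v by simp
    have "Q1 (B k) = 0" using e unfolding e2 by (simp add: algebra_simps)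
    have "inner (B k) (B k) = inner k (B (B k))" by (rule Bsym)
    also have "\<dots> = inner (B k) k" by (simp only: BB inner_commute)
    also have "\<dots> = inner (B k) (Q1 k)" by (simp only: Qk)
    also have "\<dots> = inner (Q1 (B k)) k" by (simp only: Q1_sym)
    also have "\<dots> = 0" by (simp only: \<open>Q1 (B k) = 0\<close> inner_zero_left)
    finally have "inner (B k) (B k) = 0" .
    then show ?thesis by (simp add: k_def)
  qed
  have QB: "Q1 (B y) = 0" for y
  proof -
    have "inner (Q1 (B y)) (Q1 (B y)) = inner y (B (Q1 (Q1 (B y))))" by (simp only: Q1_sym Bsym)
    then show ?thesis by (simp only: BQ) simp
  qed
  have "V2 ` K1 \<subseteq> range V1"
  proof
    fix z assume "z \<in> V2 ` K1"
    then obtain k where k: "k \<in> K1" "z = V2 k" by blast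
    have "B (V2 k) = V2 k" using k by (simp add: B_def ker_op_def)
    then have "Q1 z = 0" using QB[of "V2 k"] k by simp
    then show "z \<in> range V1" using range1_char by simp
  qed
  then have sub1: "range V2 \<subseteq> range V1" by (rule range21)
  have K21: "K2 \<subseteq> K1"
  proof
    fix x assume x: "x \<in> K2"
    then have xE: "x \<in> EE" using K2_sub_E by blast
    have Bx: "B x = 0" using x by (simp add: B_def ker_op_def)
    have "Q1 (Q1 x - B x) - B (Q1 x - B x) = x" by (rule CC'[OF xE])
    then have "Q1 x = x" using Bx BQ[of x] by simp
    then have "V1 (V1s x) = 0" by simp
    then have "V1s (V1 (V1s x)) = V1s 0" by (simp only:)
    then have "V1s x = 0" by simp
    then show "x \<in> K1" unfolding ker_op_def mem_Collect_eq .
  qed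
  have "range V1 \<subseteq> range V2"
  proof
    fix y assume "y \<in> range V1"
    then have "\<forall>k\<in>K1. inner y k = 0" using range1_perp by blast
    then have "\<forall>k\<in>K2. inner y k = 0" using K21 by blast
    then show "y \<in> range V2" using cpair.range1_perp[OF sym] by blast
  qed
  then show ?thesis using sub1 by blast
qed

section \<open>Wold decomposition\<close>

definition Vmd :: "'a \<Rightarrow> 'a" where "Vmd x = V1 (V2 x)"
definition Vsd :: "'a \<Rightarrow> 'a" where "Vsd = adjoint (V1 \<circ> V2)"

lemma Vsd_eq: "Vsd x = V2s (V1s x)" by (simp add: Vsd_def Vs_eq)
lemma Vsd_eq': "Vsd x = V1s (V2s x)" by (simp add: Vsd_def Vs_eq')
lemma EE_Vsd: "ker_op Vsd = EE" by (simp add: Vsd_def)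

lemma Vs_simps[simp]:
  "Vsd (x + y) = Vsd x + Vsd y" "Vsd (x - y) = Vsd x - Vsd y" "Vsd (r *\<^sub>R x) = r *\<^sub>R Vsd x" "Vsd 0 = 0"
  "Vsd (- x) = - Vsd x" "Vsd (iJ x) = iJ (Vsd x)" "Vsd (Vmd x) = x"
  "Vmd (x + y) = Vmd x + Vmd y" "Vmd (x - y) = Vmd x - Vmd y" "Vmd (r *\<^sub>R x) = r *\<^sub>R Vmd x" "Vmd 0 = 0"
  "Vmd (- x) = - Vmd x" "Vmd (iJ x) = iJ (Vmd x)" "inner (Vmd x) (Vmd y) = inner x y" "norm (Vmd x) = norm x"
  by (simp_all add: Vsd_eq Vmd_def)

lemma adjm: "inner (Vmd x) y = inner x (Vsd y)" by (simp add: adj1 adj2 Vsd_eq Vmd_def)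

lemma bl_Vs: "bounded_linear Vsd"
proof -
  have "Vsd = (\<lambda>x. V2s (V1s x))" by (rule ext) (simp add: Vsd_eq)
  then show ?thesis using bounded_linear_compose[OF bl2s bl1s] by simp
qed

lemma bl_Vm: "bounded_linear Vmd"
proof -
  have "Vmd = (\<lambda>x. V1 (V2 x))" by (rule ext) (simp add: Vmd_def)
  then show ?thesis using bounded_linear_compose[OF bl1 bl2] by simp
qed

lemma Vs_comm1: "Vsd (V1s x) = V1s (Vsd x)" by (simp add: Vsd_eq adj_comm)
lemma Vs_comm2: "Vsd (V2s x) = V2s (Vsd x)" by (simp add: Vsd_eq' adj_comm)
lemma Vm_comm1: "V1 (Vmd x) = Vmd (V1 x)" by (simp add: comm_pt Vmd_def)
lemma Vm_comm2: "V2 (Vmd x) = Vmd (V2 x)" by (simp add: comm_pt Vmd_def)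

lemma Vn_Suc: "(Vmd ^^ Suc n) x = (Vmd ^^ n) (Vmd x)"
  by (simp add: funpow_Suc_right del: funpow.simps)
lemma Vsn_Suc: "(Vsd ^^ Suc n) x = (Vsd ^^ n) (Vsd x)"
  by (simp add: funpow_Suc_right del: funpow.simps)

lemma Vn_lin[simp]:
  "(Vmd ^^ n) (x + y) = (Vmd ^^ n) x + (Vmd ^^ n) y"
  "(Vmd ^^ n) (x - y) = (Vmd ^^ n) x - (Vmd ^^ n) y"
  "(Vmd ^^ n) (r *\<^sub>R x) = r *\<^sub>R (Vmd ^^ n) x"
  "(Vmd ^^ n) 0 = 0"
  "(Vmd ^^ n) (iJ x) = iJ ((Vmd ^^ n) x)"
  by (induction n arbitrary: x y) simp_all

lemma Vsn_lin[simp]: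
  "(Vsd ^^ n) (x + y) = (Vsd ^^ n) x + (Vsd ^^ n) y"
  "(Vsd ^^ n) (x - y) = (Vsd ^^ n) x - (Vsd ^^ n) y"
  "(Vsd ^^ n) (r *\<^sub>R x) = r *\<^sub>R (Vsd ^^ n) x"
  "(Vsd ^^ n) 0 = 0"
  "(Vsd ^^ n) (iJ x) = iJ ((Vsd ^^ n) x)"
  by (induction n arbitrary: x y) simp_all

lemma Vsn_Vn[simp]: "(Vsd ^^ n) ((Vmd ^^ n) x) = x"
  by (induction n arbitrary: x) (simp, unfold Vsn_Suc, simp)

lemma Vn_inner[simp]: "inner ((Vmd ^^ n) x) ((Vmd ^^ n) y) = inner x y"
  by (induction n) simp_all

lemma Vn_adj: "inner ((Vmd ^^ n) x) y = inner x ((Vsd ^^ n) y)"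
  by (induction n arbitrary: x y) (simp, unfold Vn_Suc, simp add: adjm)

lemma Vn_add: "(Vmd ^^ (m + k)) x = (Vmd ^^ m) ((Vmd ^^ k) x)"
  by (simp add: funpow_add)
lemma Vsn_add: "(Vsd ^^ (m + k)) x = (Vsd ^^ m) ((Vsd ^^ k) x)"
  by (simp add: funpow_add)

lemma Vn_V1: "V1 ((Vmd ^^ n) x) = (Vmd ^^ n) (V1 x)"
  by (induction n) (simp_all add: Vm_comm1)
lemma Vn_V2: "V2 ((Vmd ^^ n) x) = (Vmd ^^ n) (V2 x)"
  by (induction n) (simp_all add: Vm_comm2)
lemma Vsn_V1s: "V1s ((Vsd ^^ n) x) = (Vsd ^^ n) (V1s x)"
  by (induction n) (simp_all add: Vs_comm1[symmetric])
lemma Vsn_V2s: "V2s ((Vsd ^^ n) x) = (Vsd ^^ n) (V2s x)"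
  by (induction n) (simp_all add: Vs_comm2[symmetric])

lemma bl_funpow:
  fixes f :: "'b::real_normed_vector \<Rightarrow> 'b"
  shows "bounded_linear f \<Longrightarrow> bounded_linear (f ^^ n)"
proof (induction n)
  case 0
  have e: "f ^^ 0 = (\<lambda>x. x)" by (rule ext) simp
  show ?case unfolding e by (rule bounded_linear_ident)
next
  case (Suc n)
  have b: "bounded_linear (f ^^ n)" using Suc.IH Suc.prems by blast
  have "bounded_linear (\<lambda>x. f ((f ^^ n) x))" by (rule bounded_linear_compose[OF Suc.prems b])
  moreover have "f ^^ Suc n = (\<lambda>x. f ((f ^^ n) x))" by (rule ext) simp
  ultimately show ?case by simp
qed

lemma bl_Vsn: "bounded_linear (Vsd ^^ n)" by (rule bl_funpow[OF bl_Vs])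
lemma bl_Vn: "bounded_linear (Vmd ^^ n)" by (rule bl_funpow[OF bl_Vm])

definition "Hu = {x. \<forall>n. \<exists>w. x = (Vmd ^^ n) w}"
definition "Hp = {x. \<forall>y\<in>Hu. inner x y = 0}"

lemma Hu_Vm0: "y \<in> Hu \<Longrightarrow> \<exists>w. y = (Vmd ^^ n) w"
proof -
  assume "y \<in> Hu"
  then have "\<forall>n. \<exists>w. y = (Vmd ^^ n) w" unfolding Hu_def mem_Collect_eq .
  then show ?thesis by (rule spec)
qed

lemma Hu_char: "Hu = {x. \<forall>n. (Vmd ^^ n) ((Vsd ^^ n) x) = x}"
proof (intro set_eqI iffI CollectI allI)
  fix x n assume "x \<in> Hu"
  then obtain w where "x = (Vmd ^^ n) w" using Hu_Vm0 by blast
  then show "(Vmd ^^ n) ((Vsd ^^ n) x) = x" by simp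
next
  fix x assume h: "x \<in> {x. \<forall>n. (Vmd ^^ n) ((Vsd ^^ n) x) = x}"
  show "x \<in> Hu" unfolding Hu_def
  proof (intro CollectI allI)
    fix n
    have "x = (Vmd ^^ n) ((Vsd ^^ n) x)" using h by simp
    then show "\<exists>w. x = (Vmd ^^ n) w" by blast
  qed
qed

lemma Hu_closed: "closed Hu"
  unfolding Hu_char
proof (rule closed_Collect_all)
  fix n
  have "continuous_on UNIV (\<lambda>x. (Vmd ^^ n) ((Vsd ^^ n) x))"
    by (rule linear_continuous_on[OF bounded_linear_compose[OF bl_Vn bl_Vsn]])
  then show "closed {x. (Vmd ^^ n) ((Vsd ^^ n) x) = x}"
    by (rule closed_Collect_eq) (rule continuous_on_id)
qed

lemma Hu_csub: "csubspace Hu"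
  unfolding csubspace_def
proof (intro conjI ballI Hu_closed)
  show "subspace Hu"
  proof (rule subspaceI)
    show "0 \<in> Hu" unfolding Hu_def by (auto intro: exI[of _ 0])
    fix x y assume x: "x \<in> Hu" and y: "y \<in> Hu"
    show "x + y \<in> Hu" unfolding Hu_def
    proof (intro CollectI allI)
      fix n
      obtain a where a: "x = (Vmd ^^ n) a" using Hu_Vm0[OF x] by blast
      obtain b where b: "y = (Vmd ^^ n) b" using Hu_Vm0[OF y] by blast
      have "x + y = (Vmd ^^ n) (a + b)" by (simp add: a b)
      then show "\<exists>w. x + y = (Vmd ^^ n) w" by blast
    qed
  next
    fix c x assume x: "x \<in> Hu"
    show "c *\<^sub>R x \<in> Hu" unfolding Hu_def
    proof (intro CollectI allI)
      fix n
      obtain a where a: "x = (Vmd ^^ n) a" using Hu_Vm0[OF x] by blast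
      have "c *\<^sub>R x = (Vmd ^^ n) (c *\<^sub>R a)" by (simp add: a)
      then show "\<exists>w. c *\<^sub>R x = (Vmd ^^ n) w" by blast
    qed
  qed
  fix x assume "x \<in> Hu"
  show "iJ x \<in> Hu" unfolding Hu_def
  proof (intro CollectI allI)
    fix n
    obtain a where a: "x = (Vmd ^^ n) a" using Hu_Vm0[OF \<open>x \<in> Hu\<close>] by blast
    have "iJ x = (Vmd ^^ n) (iJ a)" by (simp add: a)
    then show "\<exists>w. iJ x = (Vmd ^^ n) w" by blast
  qed
qed

lemma Hp_csub: "csubspace Hp"
  unfolding csubspace_def
proof (intro conjI ballI)
  show "subspace Hp" unfolding subspace_def Hp_def
    by (auto simp: inner_add_left)
  have "Hp = (\<Inter>y\<in>Hu. {x. inner x y = 0})" unfolding Hp_def by auto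
  moreover have "closed {x. inner x y = 0}" for y
    by (intro closed_Collect_eq continuous_on_inner continuous_on_id continuous_on_const)
  ultimately show "closed Hp" by auto
  fix x assume x: "x \<in> Hp"
  show "iJ x \<in> Hp" unfolding Hp_def
  proof (intro CollectI ballI)
    fix y assume y: "y \<in> Hu"
    then have "iJ y \<in> Hu" using Hu_csub by (simp add: csubspace_def)
    then have "inner x (iJ y) = 0" using x by (simp add: Hp_def)
    then show "inner (iJ x) y = 0" by (simp add: inner_iJ_right)
  qed
qed

lemma Hu_Vm: "y \<in> Hu \<Longrightarrow> \<exists>w. y = (Vmd ^^ n) w"
  unfolding Hu_def by blast

lemma Hu_V1: "x \<in> Hu \<Longrightarrow> V1 x \<in> Hu"
proof -
  assume x: "x \<in> Hu"
  show ?thesis unfolding Hu_def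
  proof (intro CollectI allI)
    fix n
    obtain w where "x = (Vmd ^^ n) w" using Hu_Vm0[OF x] by blast
    then have "V1 x = (Vmd ^^ n) (V1 w)" by (simp add: Vn_V1)
    then show "\<exists>w. V1 x = (Vmd ^^ n) w" by blast
  qed
qed
lemma Hu_V2: "x \<in> Hu \<Longrightarrow> V2 x \<in> Hu"
proof -
  assume x: "x \<in> Hu"
  show ?thesis unfolding Hu_def
  proof (intro CollectI allI)
    fix n
    obtain w where "x = (Vmd ^^ n) w" using Hu_Vm0[OF x] by blast
    then have "V2 x = (Vmd ^^ n) (V2 w)" by (simp add: Vn_V2)
    then show "\<exists>w. V2 x = (Vmd ^^ n) w" by blast
  qed
qed
lemma Hu_V1s: "x \<in> Hu \<Longrightarrow> V1s x \<in> Hu"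
proof -
  assume x: "x \<in> Hu"
  show ?thesis unfolding Hu_def
  proof (intro CollectI allI)
    fix n
    obtain w where "x = (Vmd ^^ Suc n) w" using Hu_Vm[OF x] by blast
    then have "V1s x = (Vmd ^^ n) (V2 w)"
      by (simp add: Vn_V1[symmetric] Vn_V2[symmetric] Vmd_def del: funpow.simps add: funpow_Suc_right)
    then show "\<exists>w. V1s x = (Vmd ^^ n) w" by blast
  qed
qed
lemma Hu_V2s: "x \<in> Hu \<Longrightarrow> V2s x \<in> Hu"
proof -
  assume x: "x \<in> Hu"
  show ?thesis unfolding Hu_def
  proof (intro CollectI allI)
    fix n
    obtain w where "x = (Vmd ^^ Suc n) w" using Hu_Vm[OF x] by blast
    then have "V2s x = (Vmd ^^ n) (V1 w)"
      by (simp add: Vn_V1[symmetric] Vn_V2[symmetric] comm_pt Vmd_def del: funpow.simps add: funpow_Suc_right)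
    then show "\<exists>w. V2s x = (Vmd ^^ n) w" by blast
  qed
qed

lemma Hp_Hu_orth: "x \<in> Hp \<Longrightarrow> y \<in> Hu \<Longrightarrow> inner x y = 0"
  unfolding Hp_def by blast

lemma Hp_V1: "x \<in> Hp \<Longrightarrow> V1 x \<in> Hp"
  unfolding Hp_def by (auto simp: adj1 Hu_V1s)
lemma Hp_V2: "x \<in> Hp \<Longrightarrow> V2 x \<in> Hp"
  unfolding Hp_def by (auto simp: adj2 Hu_V2s)
lemma Hp_V1s: "x \<in> Hp \<Longrightarrow> V1s x \<in> Hp"
proof -
  assume x: "x \<in> Hp"
  show ?thesis unfolding Hp_def
  proof (intro CollectI ballI)
    fix y assume "y \<in> Hu"
    then have "V1 y \<in> Hu" by (rule Hu_V1)
    then have "inner x (V1 y) = 0" using x Hp_Hu_orth by blast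
    then show "inner (V1s x) y = 0" by (simp only: adj1')
  qed
qed
lemma Hp_V2s: "x \<in> Hp \<Longrightarrow> V2s x \<in> Hp"
proof -
  assume x: "x \<in> Hp"
  show ?thesis unfolding Hp_def
  proof (intro CollectI ballI)
    fix y assume "y \<in> Hu"
    then have "V2 y \<in> Hu" by (rule Hu_V2)
    then have "inner x (V2 y) = 0" using x Hp_Hu_orth by blast
    then show "inner (V2s x) y = 0" by (simp only: adj2')
  qed
qed

lemma Hu_onto1: "V1 ` Hu = Hu"
proof
  show "V1 ` Hu \<subseteq> Hu" using Hu_V1 by blast
  show "Hu \<subseteq> V1 ` Hu"
  proof
    fix y assume y: "y \<in> Hu"
    obtain w where "y = (Vmd ^^ Suc 0) w" using Hu_Vm0[OF y] by blast
    then have yw: "y = V1 (V2 w)" by (simp add: Vmd_def)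
    have "V1 (V1s y) = V1 (V1s (V1 (V2 w)))" by (simp only: yw)
    also have "\<dots> = y" by (simp only: left_inv yw)
    finally have "y = V1 (V1s y)" by (rule HOL.sym)
    moreover have "V1s y \<in> Hu" using Hu_V1s[OF y] .
    ultimately show "y \<in> V1 ` Hu" by (rule image_eqI)
  qed
qed

lemma Hu_onto2: "V2 ` Hu = Hu"
proof
  show "V2 ` Hu \<subseteq> Hu" using Hu_V2 by blast
  show "Hu \<subseteq> V2 ` Hu"
  proof
    fix y assume y: "y \<in> Hu"
    obtain w where "y = (Vmd ^^ Suc 0) w" using Hu_Vm0[OF y] by blast
    then have "y = V1 (V2 w)" by (simp add: Vmd_def)
    then have yw: "y = V2 (V1 w)" by (simp only: comm_pt)
    have "V2 (V2s y) = V2 (V2s (V2 (V1 w)))" by (simp only: yw)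
    also have "\<dots> = y" by (simp only: left_inv yw)
    finally have "y = V2 (V2s y)" by (rule HOL.sym)
    moreover have "V2s y \<in> Hu" using Hu_V2s[OF y] .
    ultimately show "y \<in> V2 ` Hu" by (rule image_eqI)
  qed
qed

lemma decomp: "\<exists>x\<in>Hp. \<exists>y\<in>Hu. z = x + y"
proof -
  have sub: "subspace Hu" and cl: "closed Hu" using Hu_csub by (auto simp: csubspace_def)
  obtain y where y: "y \<in> Hu" and o: "\<And>w. w \<in> Hu \<Longrightarrow> inner (z - y) w = 0"
    using proj_exists[OF sub cl] by blast
  have "z - y \<in> Hp" unfolding Hp_def using o by blast
  moreover have "z = (z - y) + y" by simp
  ultimately show ?thesis using y by blast
qed

definition Qd :: "'a \<Rightarrow> 'a" where "Qd x = x - Vmd (Vsd x)"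

lemma Qd_simps[simp]: "Vsd (Qd x) = 0" "Qd (Vmd x) = 0" "Qd (x + y) = Qd x + Qd y"
  "Qd (x - y) = Qd x - Qd y" "Qd (r *\<^sub>R x) = r *\<^sub>R Qd x" "Qd 0 = 0" "Qd (iJ x) = iJ (Qd x)"
  by (simp_all add: Qd_def scaleR_diff_right)

lemma Qd_E: "Vsd e = 0 \<Longrightarrow> Qd e = e" by (simp add: Qd_def)

lemma bl_Qd: "bounded_linear Qd"
proof -
  have "Qd = (\<lambda>x. x - Vmd (Vsd x))" by (rule ext) (simp add: Qd_def)
  moreover have "bounded_linear (\<lambda>x. x - Vmd (Vsd x))"
    by (rule bounded_linear_sub[OF bounded_linear_ident bounded_linear_compose[OF bl_Vm bl_Vs]])
  ultimately show ?thesis by simp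
qed

lemma norm_split: "(norm y)\<^sup>2 = (norm (Qd y))\<^sup>2 + (norm (Vsd y))\<^sup>2"
proof -
  have "inner (Qd y) (Vmd (Vsd y)) = inner (Vmd (Vsd y)) (Qd y)" by (rule inner_commute)
  also have "\<dots> = inner (Vsd y) (Vsd (Qd y))" by (rule adjm)
  also have "\<dots> = 0" by simp
  finally have o: "inner (Qd y) (Vmd (Vsd y)) = 0" .
  have "(norm y)\<^sup>2 = (norm (Qd y + Vmd (Vsd y)))\<^sup>2" by (simp add: Qd_def)
  also have "\<dots> = (norm (Qd y))\<^sup>2 + (norm (Vmd (Vsd y)))\<^sup>2"
    by (rule norm_add_Pythagorean) (simp add: orthogonal_def o)
  finally show ?thesis by simp
qed

lemma telescope: "(norm x)\<^sup>2 = (\<Sum>n<N. (norm (Qd ((Vsd ^^ n) x)))\<^sup>2) + (norm ((Vsd ^^ N) x))\<^sup>2"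
proof (induction N)
  case 0 then show ?case by simp
next
  case (Suc N)
  have "(norm ((Vsd ^^ N) x))\<^sup>2 = (norm (Qd ((Vsd ^^ N) x)))\<^sup>2 + (norm ((Vsd ^^ Suc N) x))\<^sup>2"
    using norm_split[of "(Vsd ^^ N) x"] by simp
  then show ?case using Suc by simp
qed

abbreviation "EW \<equiv> ker_op Vsd"

definition Wd :: "'a \<Rightarrow> nat \<Rightarrow> 'a" where "Wd x = (\<lambda>n. Qd ((Vsd ^^ n) x))"

lemma Wd_hardy: "Wd x \<in> hardy EW"
  unfolding hardy_def
proof (intro CollectI conjI allI)
  show "Wd x n \<in> EW" for n by (simp add: Wd_def ker_op_def)
  show "summable (\<lambda>n. (norm (Wd x n))\<^sup>2)"
  proof (rule bounded_imp_summable)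
    show "0 \<le> (norm (Wd x n))\<^sup>2" for n by simp
    show "(\<Sum>k\<le>n. (norm (Wd x k))\<^sup>2) \<le> (norm x)\<^sup>2" for n
    proof -
      have "(\<Sum>k\<le>n. (norm (Wd x k))\<^sup>2) = (\<Sum>k<Suc n. (norm (Qd ((Vsd ^^ k) x)))\<^sup>2)"
        by (simp add: Wd_def lessThan_Suc_atMost)
      also have "\<dots> \<le> (norm x)\<^sup>2" using telescope[of x "Suc n"] by simp
      finally show ?thesis .
    qed
  qed
qed

lemma Vn_orth:
  assumes a: "a \<in> EW" and b: "b \<in> EW" and nm: "n < m"
  shows "inner ((Vmd ^^ n) a) ((Vmd ^^ m) b) = 0"
proof -
  obtain k where "m = Suc (n + k)" using less_imp_Suc_add[OF nm] by blast
  then have m: "m = n + Suc k" by simp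
  have e1: "(Vmd ^^ m) b = (Vmd ^^ n) ((Vmd ^^ Suc k) b)" unfolding m by (rule Vn_add)
  have e2: "(Vmd ^^ Suc k) b = Vmd ((Vmd ^^ k) b)" by simp
  have "inner ((Vmd ^^ n) a) ((Vmd ^^ m) b) = inner a (Vmd ((Vmd ^^ k) b))" unfolding e1 e2 by (rule Vn_inner)
  also have "\<dots> = inner (Vmd ((Vmd ^^ k) b)) a" by (rule inner_commute)
  also have "\<dots> = inner ((Vmd ^^ k) b) (Vsd a)" by (rule adjm)
  also have "\<dots> = 0" using a by (simp add: ker_op_def)
  finally show ?thesis .
qed

lemma Vn_orth':
  assumes "a \<in> EW" "b \<in> EW" "n \<noteq> m"
  shows "inner ((Vmd ^^ n) a) ((Vmd ^^ m) b) = 0"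
proof (cases "n < m")
  case True then show ?thesis using Vn_orth assms by blast
next
  case False then have "m < n" using assms(3) by simp
  then show ?thesis using Vn_orth[OF assms(2,1)] by (simp add: inner_commute)
qed

lemma QV_delta:
  assumes a: "a \<in> EW"
  shows "Qd ((Vsd ^^ m) ((Vmd ^^ n) a)) = (if n = m then a else 0)"
proof (cases "n = m")
  case True
  have "Vsd a = 0" using a by (simp add: ker_op_def)
  then show ?thesis using True by (simp add: Qd_E)
next
  case False
  show ?thesis
  proof (cases "m < n")
    case True
    obtain k where "n = Suc (m + k)" using less_imp_Suc_add[OF True] by blast
    then have n: "n = m + Suc k" by simp
    have e1: "(Vmd ^^ n) a = (Vmd ^^ m) ((Vmd ^^ Suc k) a)" unfolding n by (rule Vn_add)
    have e2: "(Vmd ^^ Suc k) a = Vmd ((Vmd ^^ k) a)" by simp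
    have "Qd ((Vsd ^^ m) ((Vmd ^^ n) a)) = Qd (Vmd ((Vmd ^^ k) a))" unfolding e1 e2 Vsn_Vn ..
    also have "\<dots> = 0" by (rule Qd_simps(2))
    finally show ?thesis using False by simp
  next
    case False2: False
    then have nm: "n < m" using False by simp
    obtain k where "m = Suc (n + k)" using less_imp_Suc_add[OF nm] by blast
    then have m: "m = Suc k + n" by simp
    have "(Vsd ^^ m) ((Vmd ^^ n) a) = (Vsd ^^ Suc k) a" unfolding m Vsn_add Vsn_Vn ..
    also have "\<dots> = (Vsd ^^ k) (Vsd a)" by (rule Vsn_Suc)
    also have "\<dots> = 0" using a by (simp add: ker_op_def)
    finally show ?thesis using False by simp
  qed
qed

lemma hardyD: "f \<in> hardy EW \<Longrightarrow> f n \<in> EW" "f \<in> hardy EW \<Longrightarrow> summable (\<lambda>n. (norm (f n))\<^sup>2)"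
  unfolding hardy_def by auto

lemma pyth_fin:
  assumes f: "f \<in> hardy EW" and I: "finite I"
  shows "(norm (\<Sum>k\<in>I. (Vmd ^^ k) (f k)))\<^sup>2 = (\<Sum>k\<in>I. (norm (f k))\<^sup>2)"
proof -
  have "pairwise (\<lambda>i j. orthogonal ((Vmd ^^ i) (f i)) ((Vmd ^^ j) (f j))) I"
    unfolding pairwise_def orthogonal_def using Vn_orth'[OF hardyD(1)[OF f] hardyD(1)[OF f]] by blast
  then have "(norm (\<Sum>k\<in>I. (Vmd ^^ k) (f k)))\<^sup>2 = (\<Sum>k\<in>I. (norm ((Vmd ^^ k) (f k)))\<^sup>2)"
    by (rule norm_sum_Pythagorean[OF I])
  also have "\<dots> = (\<Sum>k\<in>I. (norm (f k))\<^sup>2)"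
    by (simp add: norm_eq_sqrt_inner)
  finally show ?thesis .
qed

lemma series_summable:
  assumes f: "f \<in> hardy EW"
  shows "summable (\<lambda>n. (Vmd ^^ n) (f n))"
  unfolding summable_Cauchy
proof (intro allI impI)
  fix e :: real assume e: "e > 0"
  have "summable (\<lambda>n. (norm (f n))\<^sup>2)" by (rule hardyD(2)[OF f])
  then obtain N where N: "\<And>m n. m \<ge> N \<Longrightarrow> norm (\<Sum>k\<in>{m..<n}. (norm (f k))\<^sup>2) < e\<^sup>2"
    unfolding summable_Cauchy using e by (meson zero_less_power)
  show "\<exists>N. \<forall>m\<ge>N. \<forall>n. norm (\<Sum>k\<in>{m..<n}. (Vmd ^^ k) (f k)) < e"
  proof (intro exI allI impI)
    fix m n assume m: "N \<le> m"
    have "(norm (\<Sum>k\<in>{m..<n}. (Vmd ^^ k) (f k)))\<^sup>2 = (\<Sum>k\<in>{m..<n}. (norm (f k))\<^sup>2)"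
      by (rule pyth_fin[OF f]) simp
    also have "\<dots> = norm (\<Sum>k\<in>{m..<n}. (norm (f k))\<^sup>2)"
      by (simp add: sum_nonneg)
    also have "\<dots> < e\<^sup>2" by (rule N[OF m])
    finally show "norm (\<Sum>k\<in>{m..<n}. (Vmd ^^ k) (f k)) < e"
      using e by (simp add: power2_less_imp_less)
  qed
qed

lemma series_norm:
  assumes f: "f \<in> hardy EW"
  shows "(norm (\<Sum>n. (Vmd ^^ n) (f n)))\<^sup>2 = (\<Sum>n. (norm (f n))\<^sup>2)"
proof -
  have l1: "(\<lambda>N. \<Sum>n<N. (Vmd ^^ n) (f n)) \<longlonglongrightarrow> (\<Sum>n. (Vmd ^^ n) (f n))"
    by (rule summable_LIMSEQ[OF series_summable[OF f]])
  then have l2: "(\<lambda>N. (norm (\<Sum>n<N. (Vmd ^^ n) (f n)))\<^sup>2) \<longlonglongrightarrow> (norm (\<Sum>n. (Vmd ^^ n) (f n)))\<^sup>2"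
    by (intro tendsto_power tendsto_norm)
  have l3: "(\<lambda>N. \<Sum>n<N. (norm (f n))\<^sup>2) \<longlonglongrightarrow> (\<Sum>n. (norm (f n))\<^sup>2)"
    by (rule summable_LIMSEQ[OF hardyD(2)[OF f]])
  have eq: "(\<lambda>N. (norm (\<Sum>n<N. (Vmd ^^ n) (f n)))\<^sup>2) = (\<lambda>N. \<Sum>n<N. (norm (f n))\<^sup>2)"
    by (rule ext) (rule pyth_fin[OF f], simp)
  show ?thesis using l2 l3 unfolding eq by (rule LIMSEQ_unique)
qed

lemma series_Hp:
  assumes f: "f \<in> hardy EW"
  shows "(\<Sum>n. (Vmd ^^ n) (f n)) \<in> Hp"
  unfolding Hp_def
proof (intro CollectI ballI)
  fix y assume y: "y \<in> Hu"
  have s: "(\<lambda>n. (Vmd ^^ n) (f n)) sums (\<Sum>n. (Vmd ^^ n) (f n))"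
    by (rule summable_sums[OF series_summable[OF f]])
  have s2: "(\<lambda>n. inner ((Vmd ^^ n) (f n)) y) sums inner (\<Sum>n. (Vmd ^^ n) (f n)) y"
    by (rule bounded_linear.sums[OF bounded_linear_inner_left s])
  have z: "inner ((Vmd ^^ n) (f n)) y = 0" for n
  proof -
    obtain w where w: "y = (Vmd ^^ Suc n) w" using Hu_Vm0[OF y] by blast
    have "inner ((Vmd ^^ n) (f n)) y = inner (f n) (Vmd w)" unfolding w Vn_Suc by (rule Vn_inner)
    also have "\<dots> = inner (Vmd w) (f n)" by (rule inner_commute)
    also have "\<dots> = inner w (Vsd (f n))" by (rule adjm)
    also have "\<dots> = 0" using hardyD(1)[OF f, of n] by (simp add: ker_op_def)
    finally show ?thesis .
  qed
  have "(\<lambda>n. inner ((Vmd ^^ n) (f n)) y) = (\<lambda>n. 0)" by (rule ext) (rule z)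
  then have "(\<lambda>n. 0) sums inner (\<Sum>n. (Vmd ^^ n) (f n)) y" using s2 by simp
  then show "inner (\<Sum>n. (Vmd ^^ n) (f n)) y = 0" using sums_zero sums_unique2 by blast
qed

lemma series_W:
  assumes f: "f \<in> hardy EW"
  shows "Wd (\<Sum>n. (Vmd ^^ n) (f n)) = f"
proof (rule ext)
  fix m
  have s: "(\<lambda>n. (Vmd ^^ n) (f n)) sums (\<Sum>n. (Vmd ^^ n) (f n))"
    by (rule summable_sums[OF series_summable[OF f]])
  have bl: "bounded_linear (\<lambda>x. Qd ((Vsd ^^ m) x))"
    by (rule bounded_linear_compose[OF bl_Qd bl_Vsn])
  have s2: "(\<lambda>n. Qd ((Vsd ^^ m) ((Vmd ^^ n) (f n)))) sums Qd ((Vsd ^^ m) (\<Sum>n. (Vmd ^^ n) (f n)))"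
    by (rule bounded_linear.sums[OF bl s])
  have "(\<lambda>n. Qd ((Vsd ^^ m) ((Vmd ^^ n) (f n)))) = (\<lambda>n. if n = m then f n else 0)"
    by (rule ext) (simp add: QV_delta[OF hardyD(1)[OF f]])
  then have "(\<lambda>n. if n = m then f n else 0) sums Qd ((Vsd ^^ m) (\<Sum>n. (Vmd ^^ n) (f n)))"
    using s2 by simp
  then show "Wd (\<Sum>n. (Vmd ^^ n) (f n)) m = f m"
    unfolding Wd_def using sums_single[of m f] sums_unique2 by blast
qed

lemma Wd_simps[simp]: "Wd (x + y) = (\<lambda>n. Wd x n + Wd y n)" "Wd (x - y) = (\<lambda>n. Wd x n - Wd y n)"
  "Wd (r *\<^sub>R x) = (\<lambda>n. r *\<^sub>R Wd x n)" "Wd (iJ x) = (\<lambda>n. iJ (Wd x n))" "Wd 0 = (\<lambda>n. 0)"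
  by (simp_all add: Wd_def)

lemma W_inj:
  assumes x: "x \<in> Hp" and w: "Wd x = (\<lambda>n. 0)"
  shows "x = 0"
proof -
  have q: "Qd ((Vsd ^^ n) x) = 0" for n using fun_cong[OF w, of n] by (simp add: Wd_def)
  have "(Vmd ^^ n) ((Vsd ^^ n) x) = x" for n
  proof (induction n)
    case 0 then show ?case by simp
  next
    case (Suc n)
    have e: "(Vsd ^^ n) x = Vmd (Vsd ((Vsd ^^ n) x))" using q[of n] unfolding Qd_def by (simp only: right_minus_eq)
    have e1: "(Vsd ^^ Suc n) x = Vsd ((Vsd ^^ n) x)" by simp
    have "(Vmd ^^ Suc n) ((Vsd ^^ Suc n) x) = (Vmd ^^ n) (Vmd (Vsd ((Vsd ^^ n) x)))"
      unfolding e1 by (rule Vn_Suc)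
    also have "\<dots> = (Vmd ^^ n) ((Vsd ^^ n) x)" by (simp only: e[symmetric])
    also have "\<dots> = x" by (rule Suc.IH)
    finally show ?case .
  qed
  then have "x \<in> Hu" unfolding Hu_char by blast
  then have "inner x x = 0" using x Hp_Hu_orth by blast
  then show ?thesis by simp
qed

lemma W_series:
  assumes x: "x \<in> Hp"
  shows "x = (\<Sum>n. (Vmd ^^ n) (Wd x n))"
proof -
  define y where "y = (\<Sum>n. (Vmd ^^ n) (Wd x n))"
  have yH: "y \<in> Hp" unfolding y_def by (rule series_Hp[OF Wd_hardy])
  have Wy: "Wd y = Wd x" unfolding y_def by (rule series_W[OF Wd_hardy])
  have "x - y \<in> Hp" using x yH Hp_csub by (simp add: csubspace_def subspace_diff)
  moreover have "Wd (x - y) = (\<lambda>n. 0)" using Wy by simp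
  ultimately have "x - y = 0" by (rule W_inj)
  then show ?thesis by (simp add: y_def)
qed

lemma W_norm:
  assumes x: "x \<in> Hp"
  shows "(\<Sum>n. (norm (Wd x n))\<^sup>2) = (norm x)\<^sup>2"
proof -
  have "(norm x)\<^sup>2 = (norm (\<Sum>n. (Vmd ^^ n) (Wd x n)))\<^sup>2" using W_series[OF x] by simp
  also have "\<dots> = (\<Sum>n. (norm (Wd x n))\<^sup>2)" by (rule series_norm[OF Wd_hardy])
  finally show ?thesis by simp
qed

lemma W_onto: "Wd ` Hp = hardy EW"
proof
  show "Wd ` Hp \<subseteq> hardy EW" using Wd_hardy by blast
  show "hardy EW \<subseteq> Wd ` Hp"
  proof
    fix f assume f: "f \<in> hardy EW"
    have "f = Wd (\<Sum>n. (Vmd ^^ n) (f n))" using series_W[OF f] by simp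
    moreover have "(\<Sum>n. (Vmd ^^ n) (f n)) \<in> Hp" by (rule series_Hp[OF f])
    ultimately show "f \<in> Wd ` Hp" by (rule image_eqI)
  qed
qed

lemma W_unitary: "unitary_to_hardy Hp EW Wd"
  unfolding unitary_to_hardy_def using W_onto W_norm by simp

abbreviation "Q2 x \<equiv> x - V2 (V2s x)"

lemma V2s_Vmd: "V2s (Vmd w) = V1 w" by (simp add: Vmd_def comm_pt)
lemma Q2_Vmd: "V2 (V2s (Vmd w)) = Vmd w" by (simp only: V2s_Vmd) (simp add: Vmd_def comm_pt)

lemma Qd_V1: "Qd (V1 y) = V1 (Q2 y)" by (simp add: Qd_def Vmd_def Vsd_eq)

lemma Q2_Qd: "Q2 (Qd y) = Q2 y" by (simp add: Qd_def Q2_Vmd)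

lemma Qd_V2s: "Qd (V2s z) = V2s (Qd z) + V1 (Q2 (Qd (Vsd z)))"
proof -
  have z: "V2s (Qd z) + V1 (Vsd z) = V2s z" by (simp add: Qd_def V2s_Vmd)
  have a: "Qd (V2s (Qd z)) = V2s (Qd z)" by (rule Qd_E) (simp add: Vs_comm2)
  have "Qd (V2s z) = Qd (V2s (Qd z) + V1 (Vsd z))" by (simp only: z)
  also have "\<dots> = V2s (Qd z) + V1 (Q2 (Vsd z))" by (simp only: Qd_simps(3) a Qd_V1)
  also have "\<dots> = V2s (Qd z) + V1 (Q2 (Qd (Vsd z)))" by (simp only: Q2_Qd)
  finally show ?thesis .
qed

lemma W_V1: "Wd (V1 x) n = V1 (Q2 (Wd x n)) + (if n = 0 then 0 else V2s (Wd x (n - 1)))"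
proof (cases n)
  case 0
  have "Wd (V1 x) n = Qd (V1 x)" by (simp add: Wd_def 0)
  also have "\<dots> = V1 (Q2 x)" by (rule Qd_V1)
  also have "\<dots> = V1 (Q2 (Wd x n))" by (simp only: Wd_def 0 funpow_0 Q2_Qd)
  finally show ?thesis using 0 by simp
next
  case (Suc k)
  define z where "z = (Vsd ^^ k) x"
  have e1: "(Vsd ^^ Suc k) (V1 x) = V2s z"
    by (simp only: Vsn_Suc z_def Vsn_V2s) (simp add: Vsd_eq)
  have e2: "Vsd ((Vsd ^^ k) x) = (Vsd ^^ Suc k) x" by simp
  have "Wd (V1 x) n = Qd (V2s z)" by (simp only: Wd_def Suc e1)
  also have "\<dots> = V2s (Qd z) + V1 (Q2 (Qd (Vsd z)))" by (rule Qd_V2s)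
  also have "\<dots> = V2s (Wd x k) + V1 (Q2 (Wd x n))" by (simp only: Wd_def z_def e2 Suc)
  finally show ?thesis using Suc by simp
qed

lemma sym_Vmd: "cpair.Vmd V2 V1 = Vmd"
  by (rule ext) (simp add: cpair.Vmd_def[OF sym] Vmd_def comm_pt)
lemma sym_Vsd: "cpair.Vsd V2 V1 = Vsd"
  by (simp add: cpair.Vsd_def[OF sym] Vsd_def comm)
lemma sym_Qd: "cpair.Qd V2 V1 = Qd"
  by (rule ext) (simp add: cpair.Qd_def[OF sym] Qd_def sym_Vmd sym_Vsd)
lemma sym_Wd: "cpair.Wd V2 V1 = Wd"
  by (rule ext) (simp add: cpair.Wd_def[OF sym] Wd_def sym_Qd sym_Vsd)
lemma sym_Hu: "cpair.Hu V2 V1 = Hu"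
  by (simp add: cpair.Hu_def[OF sym] Hu_def sym_Vmd)
lemma sym_Hp: "cpair.Hp V2 V1 = Hp"
  by (simp add: cpair.Hp_def[OF sym] Hp_def sym_Hu)

lemma W_V2: "Wd (V2 x) n = V2 (Q1 (Wd x n)) + (if n = 0 then 0 else V1s (Wd x (n - 1)))"
  using cpair.W_V1[OF sym, of x n] by (simp only: sym_Wd)

definition Pd :: "'a \<Rightarrow> 'a" where "Pd e = V2 (V2s e)"
definition Ud :: "'a \<Rightarrow> 'a" where "Ud e = V2 (Q1 e) + V1s e"
definition Uid :: "'a \<Rightarrow> 'a" where "Uid e = V2s e + V1 (Q2 e)"

lemma EW_iff: "e \<in> EW \<longleftrightarrow> V2s (V1s e) = 0" by (simp add: ker_op_def Vsd_eq)
lemma EW_iff': "e \<in> EW \<longleftrightarrow> V1s (V2s e) = 0" by (simp add: ker_op_def Vsd_eq')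

lemma Ud_EW: "e \<in> EW \<Longrightarrow> Ud e \<in> EW"
  unfolding EW_iff' Ud_def by (simp add: adj_comm)
lemma Uid_EW: "e \<in> EW \<Longrightarrow> Uid e \<in> EW"
  unfolding EW_iff Uid_def by (simp add: adj_comm)
lemma Pd_EW: "e \<in> EW \<Longrightarrow> Pd e \<in> EW"
  unfolding EW_iff' Pd_def by simp

lemma Uid_Ud: "e \<in> EW \<Longrightarrow> Uid (Ud e) = e"
  unfolding EW_iff Uid_def Ud_def by simp
lemma Ud_Uid: "e \<in> EW \<Longrightarrow> Ud (Uid e) = e"
  unfolding EW_iff' Uid_def Ud_def by (simp add: adj_comm)

lemma Ud_norm: "e \<in> EW \<Longrightarrow> norm (Ud e) = norm e"
proof -
  assume e: "e \<in> EW"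
  have "inner (V2 (Q1 e)) (V1s e) = inner (Q1 e) (V2s (V1s e))" by (rule adj2)
  also have "\<dots> = 0" using e unfolding EW_iff by simp
  finally have o: "inner (V2 (Q1 e)) (V1s e) = 0" .
  have o2: "inner (Q1 e) (V1 (V1s e)) = 0" by (simp add: adj1' inner_diff_left)
  have "(norm (Ud e))\<^sup>2 = (norm (V2 (Q1 e)))\<^sup>2 + (norm (V1s e))\<^sup>2"
    unfolding Ud_def by (rule norm_add_Pythagorean) (unfold orthogonal_def, rule o)
  also have "\<dots> = (norm (Q1 e))\<^sup>2 + (norm (V1 (V1s e)))\<^sup>2" by (simp only: norm_iso)
  also have "\<dots> = (norm (Q1 e + V1 (V1s e)))\<^sup>2"
    by (rule norm_add_Pythagorean[symmetric]) (unfold orthogonal_def, rule o2)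
  also have "\<dots> = (norm e)\<^sup>2" by simp
  finally show ?thesis by simp
qed

lemma inj_Ud: "inj_on Ud EW"
  by (rule inj_on_inverseI[of _ Uid]) (rule Uid_Ud)

lemma inv_Ud: "y \<in> EW \<Longrightarrow> inv_into EW Ud y = Uid y"
  by (rule inv_into_f_eq[OF inj_Ud Uid_EW Ud_Uid])

lemma EW_csub: "csubspace EW"
  unfolding csubspace_def
proof (intro conjI ballI)
  show "subspace EW" by (rule subspaceI) (auto simp: ker_op_def)
  have "continuous_on UNIV Vsd" by (rule linear_continuous_on[OF bl_Vs])
  then show "closed EW" unfolding ker_op_def by (rule closed_Collect_eq) (rule continuous_on_const)
  fix x assume "x \<in> EW" then show "iJ x \<in> EW" by (simp add: ker_op_def)
qed

lemma EW_sub: "x \<in> EW \<Longrightarrow> y \<in> EW \<Longrightarrow> x - y \<in> EW" by (simp add: ker_op_def)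

lemma Pd_proj: "proj_on EW Pd"
  unfolding proj_on_def clinear_on_def
proof (intro conjI ballI allI)
  show "Pd ` EW \<subseteq> EW" using Pd_EW by blast
qed (simp_all add: Pd_def adj2 adj2')

lemma Ud_unitary: "unitary_on EW Ud"
  unfolding unitary_on_def clinear_on_def
proof (intro conjI ballI allI)
  show "Ud ` EW \<subseteq> EW" using Ud_EW by blast
  show "Ud ` EW = EW"
  proof
    show "Ud ` EW \<subseteq> EW" using Ud_EW by blast
    show "EW \<subseteq> Ud ` EW"
    proof
      fix y assume y: "y \<in> EW"
      have "y = Ud (Uid y)" using Ud_Uid[OF y] by simp
      then show "y \<in> Ud ` EW" using Uid_EW[OF y] by (rule image_eqI)
    qed
  qed
next
  fix x assume "x \<in> EW" then show "norm (Ud x) = norm x" by (rule Ud_norm)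
qed (simp_all add: Ud_def algebra_simps)

lemma bcl_exists: "bcl_triple V1 V2 EW Pd Ud"
  unfolding bcl_triple_def
proof (intro conjI EW_csub Pd_proj Ud_unitary, rule exI[of _ Hp], rule exI[of _ Hu], rule exI[of _ Wd], intro conjI)
  show "csubspace Hp" by (rule Hp_csub)
  show "csubspace Hu" by (rule Hu_csub)
  show "\<forall>x\<in>Hp. \<forall>y\<in>Hu. inner x y = 0" using Hp_Hu_orth by blast
  show "\<forall>z. \<exists>x\<in>Hp. \<exists>y\<in>Hu. z = x + y" using decomp by blast
  show "V1 ` Hp \<subseteq> Hp" using Hp_V1 by blast
  show "V2 ` Hp \<subseteq> Hp" using Hp_V2 by blast
  show "V1 ` Hu \<subseteq> Hu" using Hu_V1 by blast
  show "V2 ` Hu \<subseteq> Hu" using Hu_V2 by blast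
  show "V1s ` Hp \<subseteq> Hp" using Hp_V1s by blast
  show "V2s ` Hp \<subseteq> Hp" using Hp_V2s by blast
  show "V1s ` Hu \<subseteq> Hu" using Hu_V1s by blast
  show "V2s ` Hu \<subseteq> Hu" using Hu_V2s by blast
  show "V1 ` Hu = Hu" by (rule Hu_onto1)
  show "V2 ` Hu = Hu" by (rule Hu_onto2)
  show "unitary_to_hardy Hp EW Wd" by (rule W_unitary)
  show "\<forall>x\<in>Hp. Wd (V1 x) = mult_op (\<lambda>e. inv_into EW Ud (e - Pd e)) (\<lambda>e. inv_into EW Ud (Pd e)) (Wd x)"
  proof (intro ballI ext)
    fix x n
    have h: "Wd x k \<in> EW" for k using hardyD(1)[OF Wd_hardy] .
    have A: "inv_into EW Ud (e - Pd e) = V1 (Q2 e)" if "e \<in> EW" for e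
    proof -
      have "e - Pd e \<in> EW" using that Pd_EW EW_sub by blast
      then have "inv_into EW Ud (e - Pd e) = Uid (e - Pd e)" by (rule inv_Ud)
      also have "\<dots> = V1 (Q2 e)" by (simp add: Uid_def Pd_def)
      finally show ?thesis .
    qed
    have B: "inv_into EW Ud (Pd e) = V2s e" if "e \<in> EW" for e
    proof -
      have "inv_into EW Ud (Pd e) = Uid (Pd e)" using Pd_EW[OF that] by (rule inv_Ud)
      also have "\<dots> = V2s e" by (simp add: Uid_def Pd_def)
      finally show ?thesis .
    qed
    show "Wd (V1 x) n = mult_op (\<lambda>e. inv_into EW Ud (e - Pd e)) (\<lambda>e. inv_into EW Ud (Pd e)) (Wd x) n"
      unfolding mult_op_def W_V1 by (simp only: A[OF h] B[OF h])
  qed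
  show "\<forall>x\<in>Hp. Wd (V2 x) = mult_op (\<lambda>e. Pd (Ud e)) (\<lambda>e. Ud e - Pd (Ud e)) (Wd x)"
  proof (intro ballI ext)
    fix x n
    have h: "Wd x k \<in> EW" for k using hardyD(1)[OF Wd_hardy] .
    have A: "Pd (Ud e) = V2 (Q1 e)" if "e \<in> EW" for e
      using that unfolding EW_iff by (simp add: Pd_def Ud_def)
    have B: "Ud e - V2 (Q1 e) = V1s e" if "e \<in> EW" for e
      using that unfolding EW_iff by (simp add: Ud_def)
    show "Wd (V2 x) n = mult_op (\<lambda>e. Pd (Ud e)) (\<lambda>e. Ud e - Pd (Ud e)) (Wd x) n"
      unfolding mult_op_def W_V2 by (simp only: A[OF h] B[OF h])
  qed
qed

lemma b_imp_a: "V1 ` K2 = V2 ` K1 \<Longrightarrow> range V1 = range V2"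
proof -
  assume b: "V1 ` K2 = V2 ` K1"
  have "V2 ` K1 \<subseteq> range V1" unfolding b[symmetric] by blast
  then have 1: "range V2 \<subseteq> range V1" by (rule range21)
  have "V1 ` K2 \<subseteq> range V2" unfolding b by blast
  then have 2: "range V1 \<subseteq> range V2" by (rule cpair.range21[OF sym])
  show ?thesis using 1 2 by blast
qed

lemma a_imp_b: "range V1 = range V2 \<Longrightarrow> V1 ` K2 = V2 ` K1"
proof -
  assume a: "range V1 = range V2"
  have b1: "V1 ` K2 = range V1 \<inter> EE" by (rule V1K2)
  have "V2 ` K1 = range V2 \<inter> ker_op (adjoint (V2 \<circ> V1))" by (rule cpair.V1K2[OF sym])
  then have b2: "V2 ` K1 = range V2 \<inter> EE" by (simp only: comm)
  show "V1 ` K2 = V2 ` K1" by (simp only: b1 b2 a)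
qed

lemma EW_EE: "EW = EE" by (rule EE_Vsd)

lemma e_concrete:
  assumes h: "Ud ` (Pd ` EW) = (\<lambda>x. x - Pd x) ` EW"
  shows "V1 ` K2 = V2 ` K1"
proof
  show "V1 ` K2 \<subseteq> V2 ` K1"
  proof
    fix z assume "z \<in> V1 ` K2"
    then obtain b where b: "b \<in> K2" and z: "z = V1 b" by blast
    have vb: "V2s b = 0" using b by (simp add: ker_op_def)
    have bE: "b \<in> EW" using b K2_sub_E EW_EE by blast
    have "Pd b = 0" by (simp add: Pd_def vb)
    then have "b = b - Pd b" by simp
    then have "b \<in> (\<lambda>x. x - Pd x) ` EW" using bE by (rule image_eqI)
    then have "b \<in> Ud ` (Pd ` EW)" unfolding h .
    then obtain e where eE: "e \<in> EW" and be: "b = Ud (Pd e)" by blast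
    have "Uid b = Pd e" unfolding be by (rule Uid_Ud[OF Pd_EW[OF eE]])
    moreover have "Uid b = V1 b" by (simp add: Uid_def vb)
    ultimately have "z = V2 (V2s e)" by (simp add: z Pd_def)
    moreover have "V2s e \<in> K1" using eE unfolding EW_iff' by (simp add: ker_op_def)
    ultimately show "z \<in> V2 ` K1" by blast
  qed
next
  show "V2 ` K1 \<subseteq> V1 ` K2"
  proof
    fix z assume "z \<in> V2 ` K1"
    then obtain a where a: "a \<in> K1" and z: "z = V2 a" by blast
    have va: "V1s a = 0" using a by (simp add: ker_op_def)
    have aE: "V2 a \<in> EW" unfolding EW_iff' by (simp add: va)
    have "Pd (V2 a) = V2 a" by (simp add: Pd_def)
    then have "Ud (V2 a) \<in> Ud ` (Pd ` EW)" using aE by (metis image_eqI)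
    then have "Ud (V2 a) \<in> (\<lambda>x. x - Pd x) ` EW" unfolding h .
    then obtain e where eE: "e \<in> EW" and ue: "Ud (V2 a) = e - Pd e" by blast
    have "V2 a = Uid (Ud (V2 a))" using Uid_Ud[OF aE] by simp
    also have "\<dots> = Uid (e - Pd e)" by (simp only: ue)
    also have "\<dots> = V1 (e - V2 (V2s e))" by (simp add: Uid_def Pd_def)
    finally have "z = V1 (e - V2 (V2s e))" by (simp only: z)
    moreover have "e - V2 (V2s e) \<in> K2" by (simp add: ker_op_def)
    ultimately show "z \<in> V1 ` K2" by blast
  qed
qed

lemma e_backward:
  assumes "\<forall>E P U. bcl_triple V1 V2 E P U \<longrightarrow> U ` (P ` E) = (\<lambda>x. x - P x) ` E"
  shows "range V1 = range V2"
proof -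
  have "Ud ` (Pd ` EW) = (\<lambda>x. x - Pd x) ` EW" using assms bcl_exists by blast
  then show ?thesis by (intro b_imp_a e_concrete)
qed

lemma delta_hardy:
  assumes E: "csubspace E" and a: "a \<in> E"
  shows "(\<lambda>n. if n = 0 then a else 0) \<in> hardy E"
  unfolding hardy_def
proof (intro CollectI conjI allI)
  have z: "0 \<in> E" using E by (simp add: csubspace_def subspace_0)
  show "(if n = 0 then a else 0) \<in> E" for n using a z by simp
  show "summable (\<lambda>n. (norm (if n = 0 then a else 0))\<^sup>2)"
    by (rule summable_finite[of "{0}"]) simp_all
qed

lemma e_forward:
  assumes a: "range V1 = range V2" and bcl: "bcl_triple V1 V2 E P U"
  shows "U ` (P ` E) = (\<lambda>x. x - P x) ` E"
proof -
  have E: "csubspace E" and Pp: "proj_on E P" and Uu: "unitary_on E U"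
    using bcl by (auto simp: bcl_triple_def)
  obtain Hp' Hu' W where Hp': "csubspace Hp'" and Hu': "csubspace Hu'"
    and orth: "\<forall>x\<in>Hp'. \<forall>y\<in>Hu'. inner x y = 0"
    and dec: "\<forall>z. \<exists>x\<in>Hp'. \<exists>y\<in>Hu'. z = x + y"
    and p1: "V1 ` Hp' \<subseteq> Hp'" and p2: "V2 ` Hp' \<subseteq> Hp'" and u1: "V1 ` Hu' \<subseteq> Hu'" and u2: "V2 ` Hu' \<subseteq> Hu'"
    and W: "unitary_to_hardy Hp' E W"
    and W1: "\<forall>x\<in>Hp'. W (V1 x) = mult_op (\<lambda>e. inv_into E U (e - P e)) (\<lambda>e. inv_into E U (P e)) (W x)"
    and W2: "\<forall>x\<in>Hp'. W (V2 x) = mult_op (\<lambda>e. P (U e)) (\<lambda>e. U e - P (U e)) (W x)"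
    using bcl unfolding bcl_triple_def by (elim conjE exE) (rule that, assumption+)
  have Won: "W ` Hp' = hardy E" using W by (simp add: unitary_to_hardy_def)
  have subE: "subspace E" using E by (simp add: csubspace_def)
  have subHp: "subspace Hp'" using Hp' by (simp add: csubspace_def)
  have PE: "P x \<in> E" if "x \<in> E" for x using Pp that by (auto simp: proj_on_def clinear_on_def)
  have PP: "P (P x) = P x" if "x \<in> E" for x using Pp that by (auto simp: proj_on_def)
  have Padd: "P (x + y) = P x + P y" if "x \<in> E" "y \<in> E" for x y using Pp that by (auto simp: proj_on_def clinear_on_def)
  have Pscale: "P (r *\<^sub>R x) = r *\<^sub>R P x" if "x \<in> E" for x r using Pp that by (auto simp: proj_on_def clinear_on_def)
  have Pdiff: "P (x - y) = P x - P y" if "x \<in> E" "y \<in> E" for x y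
  proof -
    have m: "(-1) *\<^sub>R y \<in> E" by (rule subspace_scale[OF subE that(2)])
    have f1: "P (x + (-1) *\<^sub>R y) = P x + P ((-1) *\<^sub>R y)" by (rule Padd[OF that(1) m])
    have f2: "P ((-1) *\<^sub>R y) = (-1) *\<^sub>R P y" by (rule Pscale[OF that(2)])
    have e: "x - y = x + (-1) *\<^sub>R y" by simp
    show ?thesis unfolding e f1 f2 by simp
  qed
  have UE: "U ` E = E" using Uu by (simp add: unitary_on_def)
  have Einv: "inv_into E U x \<in> E" if "x \<in> E" for x
  proof -
    have "x \<in> U ` E" using that UE by simp
    then show ?thesis by (rule inv_into_into)
  qed
  have UUi: "U (inv_into E U x) = x" if "x \<in> E" for x
  proof -
    have "x \<in> U ` E" using that UE by simp
    then show ?thesis by (rule f_inv_into_f)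
  qed
  have Ein: "U x \<in> E" if "x \<in> E" for x using that UE by blast
  have diffE: "x - y \<in> E" if "x \<in> E" "y \<in> E" for x y using subE that by (simp add: subspace_diff)
  have pre: "\<exists>w\<in>Hp'. W w = (\<lambda>n. if n = 0 then c else 0)" if "c \<in> E" for c
  proof -
    have "(\<lambda>n. if n = 0 then c else 0) \<in> W ` Hp'" unfolding Won by (rule delta_hardy[OF E that])
    then obtain w where "(\<lambda>n. if n = 0 then c else 0) = W w" "w \<in> Hp'" by (rule imageE)
    then show ?thesis by (intro bexI[of _ w]) (rule HOL.sym)
  qed
  have HpE: "W w 0 \<in> E" if "w \<in> Hp'" for w
  proof -
    have "W w \<in> hardy E" using that Won by blast
    then show ?thesis by (simp add: hardy_def)
  qed
  have shift: "\<exists>up\<in>Hp'. Vb w = Va up"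
    if w: "w \<in> Hp'" and eq: "Vb w = Va u" and Vab: "Vb ` Hp' \<subseteq> Hp'" "Va ` Hp' \<subseteq> Hp'" "Va ` Hu' \<subseteq> Hu'"
    and lin: "\<And>x y. Va (x + y) = Va x + Va y"
    for Va Vb u w
  proof -
    obtain up uu where up: "up \<in> Hp'" and uu: "uu \<in> Hu'" and ud: "u = up + uu" using dec by blast
    have "Va uu = Vb w - Va up" using eq ud lin by simp
    moreover have "Vb w - Va up \<in> Hp'" using Vab w up subHp by (auto intro: subspace_diff)
    ultimately have "Va uu \<in> Hp'" by simp
    moreover have "Va uu \<in> Hu'" using Vab uu by blast
    ultimately have "inner (Va uu) (Va uu) = 0" using orth by blast
    then have "Va uu = 0" by simp
    then have "Vb w = Va up" using eq ud lin by simp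
    then show ?thesis using up by blast
  qed
  show ?thesis
  proof
    show "U ` (P ` E) \<subseteq> (\<lambda>x. x - P x) ` E"
    proof
      fix y assume "y \<in> U ` (P ` E)"
      then obtain e0 where e0: "e0 \<in> E" and y: "y = U (P e0)" by blast
      define e where "e = P e0"
      have eE: "e \<in> E" using PE[OF e0] by (simp add: e_def)
      define c where "c = inv_into E U e"
      have cE: "c \<in> E" using Einv[OF eE] by (simp add: c_def)
      have Uc: "U c = e" using UUi[OF eE] by (simp add: c_def)
      obtain w where w: "w \<in> Hp'" and Ww: "W w = (\<lambda>n. if n = 0 then c else 0)" using pre[OF cE] by blast
      have Ww0: "W w 0 = c" using Ww by simp
      have m2: "W (V2 w) = mult_op (\<lambda>e. P (U e)) (\<lambda>e. U e - P (U e)) (W w)" using W2 w by blast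
      have "W (V2 w) 0 = P (U (W w 0))" unfolding m2 mult_op_def by simp
      also have "\<dots> = e" unfolding Ww0 Uc e_def by (rule PP[OF e0])
      finally have W20: "W (V2 w) 0 = e" .
      have "V2 w \<in> range V1" unfolding a by (rule rangeI)
      then obtain u where u: "V2 w = V1 u" by blast
      obtain up where up: "up \<in> Hp'" and eq: "V2 w = V1 up"
        using shift[OF w u p2 p1 u1 lin_simps(1)] by blast
      define h where "h = W up 0"
      have hE: "h \<in> E" using HpE[OF up] by (simp add: h_def)
      have m1: "W (V1 up) = mult_op (\<lambda>e. inv_into E U (e - P e)) (\<lambda>e. inv_into E U (P e)) (W up)" using W1 up by blast
      have "W (V1 up) 0 = inv_into E U (h - P h)" unfolding m1 mult_op_def h_def by simp
      then have "e = inv_into E U (h - P h)" using W20 eq by simp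
      then have "U e = h - P h" using UUi[OF diffE[OF hE PE[OF hE]]] by simp
      then have "y = h - P h" using y by (simp add: e_def)
      then show "y \<in> (\<lambda>x. x - P x) ` E" using hE by (rule image_eqI)
    qed
  next
    show "(\<lambda>x. x - P x) ` E \<subseteq> U ` (P ` E)"
    proof
      fix y assume "y \<in> (\<lambda>x. x - P x) ` E"
      then obtain e0 where e0: "e0 \<in> E" and y: "y = e0 - P e0" by blast
      have yE: "y \<in> E" unfolding y by (rule diffE[OF e0 PE[OF e0]])
      have Py: "P y = 0" unfolding y Pdiff[OF e0 PE[OF e0]] PP[OF e0] by simp
      obtain w where w: "w \<in> Hp'" and Ww: "W w = (\<lambda>n. if n = 0 then y else 0)" using pre[OF yE] by blast
      have Ww0: "W w 0 = y" using Ww by simp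
      have m1: "W (V1 w) = mult_op (\<lambda>e. inv_into E U (e - P e)) (\<lambda>e. inv_into E U (P e)) (W w)" using W1 w by blast
      have "W (V1 w) 0 = inv_into E U (W w 0 - P (W w 0))" unfolding m1 mult_op_def by simp
      then have W10: "W (V1 w) 0 = inv_into E U y" unfolding Ww0 Py by simp
      have "V1 w \<in> range V2" unfolding a[symmetric] by (rule rangeI)
      then obtain u where u: "V1 w = V2 u" by blast
      obtain up where up: "up \<in> Hp'" and eq: "V1 w = V2 up"
        using shift[OF w u p1 p2 u2 lin_simps(6)] by blast
      define h where "h = W up 0"
      have hE: "h \<in> E" using HpE[OF up] by (simp add: h_def)
      have m2: "W (V2 up) = mult_op (\<lambda>e. P (U e)) (\<lambda>e. U e - P (U e)) (W up)" using W2 up by blast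
      have "W (V2 up) 0 = P (U h)" unfolding m2 mult_op_def h_def by simp
      then have "inv_into E U y = P (U h)" using W10 eq by simp
      then have "y = U (P (U h))" using UUi[OF yE] by simp
      moreover have "P (U h) \<in> P ` E" using Ein[OF hE] by (rule imageI)
      ultimately show "y \<in> U ` (P ` E)" by (rule image_eqI)
    qed
  qed
qed

end

theorem theorem5p3:
  fixes V1 V2 :: "'a::complex_hilbert \<Rightarrow> 'a"
  assumes iso1: "isometry V1" and iso2: "isometry V2"
    and comm: "V1 \<circ> V2 = V2 \<circ> V1"
  defines "V \<equiv> V1 \<circ> V2"
  shows
    "(range V1 = range V2 \<longleftrightarrow>
        V1 ` ker_op (adjoint V2) = V2 ` ker_op (adjoint V1))
   \<and> (range V1 = range V2 \<longleftrightarrow>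
        (\<exists>P1 P2. is_projection P1 \<and> is_projection P2 \<and> (\<forall>x. P1 (P2 x) = 0) \<and>
           defect_op V1 V2 = (\<lambda>x. P1 x - P2 x) \<and>
           {a + b | a b. a \<in> range P1 \<and> b \<in> range P2} = ker_op (adjoint V)))
   \<and> (range V1 = range V2 \<longleftrightarrow>
        (\<forall>x\<in>ker_op (adjoint V1). fringe1 V1 V2 x = 0) \<and>
        (\<forall>x\<in>ker_op (adjoint V2). fringe2 V1 V2 x = 0))
   \<and> (range V1 = range V2 \<longleftrightarrow>
        (\<forall>E P U. bcl_triple V1 V2 E P U \<longrightarrow> U ` (P ` E) = (\<lambda>x. x - P x) ` E))"
proof -
  interpret c: cpair V1 V2 using iso1 iso2 comm by (rule cpair.intro)
  have s: "cpair V2 V1" by (rule c.sym)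
  have p1: "range V1 = range V2 \<longleftrightarrow> V1 ` ker_op (adjoint V2) = V2 ` ker_op (adjoint V1)"
    using c.a_imp_b c.b_imp_a by blast
  have p2: "range V1 = range V2 \<longleftrightarrow>
        (\<exists>P1 P2. is_projection P1 \<and> is_projection P2 \<and> (\<forall>x. P1 (P2 x) = 0) \<and>
           defect_op V1 V2 = (\<lambda>x. P1 x - P2 x) \<and>
           {a + b | a b. a \<in> range P1 \<and> b \<in> range P2} = ker_op (adjoint V))"
    unfolding V_def using c.c_forward c.c_backward by blast
  have f1: "(\<forall>x\<in>ker_op (adjoint V1). fringe1 V1 V2 x = 0) \<longleftrightarrow> range V2 \<subseteq> range V1"
    unfolding fringe1_def by (rule c.fringe_char)
  have f2: "(\<forall>x\<in>ker_op (adjoint V2). fringe2 V1 V2 x = 0) \<longleftrightarrow> range V1 \<subseteq> range V2"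
    unfolding fringe2_def by (rule cpair.fringe_char[OF s])
  have p3: "range V1 = range V2 \<longleftrightarrow>
        (\<forall>x\<in>ker_op (adjoint V1). fringe1 V1 V2 x = 0) \<and>
        (\<forall>x\<in>ker_op (adjoint V2). fringe2 V1 V2 x = 0)"
    unfolding f1 f2 by blast
  have p4: "range V1 = range V2 \<longleftrightarrow>
        (\<forall>E P U. bcl_triple V1 V2 E P U \<longrightarrow> U ` (P ` E) = (\<lambda>x. x - P x) ` E)"
    using c.e_forward c.e_backward by blast
  show ?thesis using p1 p2 p3 p4 by blast
qed

end
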